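(* Let $\beta_1,\dots,\beta_N\in\mathbb R$ satisfy $(d-1)\sum_i\beta_i^2+(\sum_i\beta_i)^2=1$. Then the map $T_\beta$ is a quantum channel whose Choi matrix is $C_\beta$.
   Context: Fix $d\ge2$, $N\ge1$. For a permutation $\sigma$ of $\{0,\dots,n-1\}$, $\Pi_\sigma(v_0\otimes\cdots\otimes v_{n-1})=v_{\sigma^{-1}(0)}\otimes\cdots\otimes v_{\sigma^{-1}(n-1)}$ on $(\mathbb C^d)^{\otimes n}$. On $(\mathbb C^d)^{\otimes(N+1)}$ (factors $0,\dots,N$), $\Pi_\sigma^\Gamma$ is the partial transpose on factor $0$ and $\Sigma_{a,b}=\{\sigma:\sigma(0)=a,\sigma(b)=0\}$. Define $C_\beta=\frac{d}{\binom{N+d-1}{N}}\frac{N+d-1}{N}\sum_{1\le a,b\le N}\sum_{\sigma\in\Sigma_{a,b}}\frac{\beta_a\beta_b}{(N-1)!}\Pi_\sigma^\Gamma$. Let $P_\beta=\frac1{N!}\sum_{\sigma}\beta_{\sigma(0)+1}\Pi_\sigma$, summed over permutations $\sigma$ of $\{0,\dots,N-1\}$ (operators on $(\mathbb C^d)^{\otimes N}$), and $T_\beta(\rho)=\frac{dN(N+d-1)}{\binom{N+d-1}{N}}P_\beta(\rho\otimes I^{\otimes(N-1)})P_\beta^{\mathsf T}$, with ${}^{\mathsf T}$ the transpose in the standard basis. The Choi matrix of $T$ is $C_T=\sum_{i,j}|i\rangle\langle j|\otimes T(|i\rangle\langle j|)$; a quantum channel is a completely positive trace-preserving linear map. *)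

theory Defs
  imports Complex_Main "HOL-Combinatorics.Permutations"
begin

text \<open>Operators on (C^d)^{tensor n} are represented by their matrix entries in the
standard product basis: a basis vector is a list x of length n with entries < d
(x ! k is the index of the basis vector in tensor factor k).\<close>

type_synonym op = "nat list \<Rightarrow> nat list \<Rightarrow> complex"

definition idx :: "nat \<Rightarrow> nat \<Rightarrow> nat list set" where
  "idx d n = {xs. length xs = n \<and> set xs \<subseteq> {..<d}}"

text \<open>Pi_sigma (v_0 x ... x v_{n-1}) = v_{sigma^-1 0} x ... x v_{sigma^-1 (n-1)}:
 the entry <x| Pi_sigma |y> is 1 iff x ! (sigma j) = y ! j for all j < n.\<close>
definition perm_op :: "nat \<Rightarrow> (nat \<Rightarrow> nat) \<Rightarrow> op" where
  "perm_op n \<sigma> x y = (if (\<forall>j<n. x ! (\<sigma> j) = y ! j) then 1 else 0)"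

definition ptrans0 :: "op \<Rightarrow> op" where
  "ptrans0 A x y = A (x[0 := y ! 0]) (y[0 := x ! 0])"

definition op_mult :: "nat \<Rightarrow> nat \<Rightarrow> op \<Rightarrow> op \<Rightarrow> op" where
  "op_mult d n A B x z = (\<Sum>y\<in>idx d n. A x y * B y z)"

definition op_transpose :: "op \<Rightarrow> op" where
  "op_transpose A x y = A y x"

text \<open>rho tensor I^{tensor (N-1)}, rho a d x d matrix acting on factor 0.\<close>
definition tensor_id :: "(nat \<Rightarrow> nat \<Rightarrow> complex) \<Rightarrow> op" where
  "tensor_id \<rho> x y = \<rho> (x ! 0) (y ! 0) * (if tl x = tl y then 1 else 0)"

definition Sigma_ab :: "nat \<Rightarrow> nat \<Rightarrow> nat \<Rightarrow> (nat \<Rightarrow> nat) set" where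
  "Sigma_ab N a b = {\<sigma>. \<sigma> permutes {..N} \<and> \<sigma> 0 = a \<and> \<sigma> b = 0}"

definition C_beta :: "nat \<Rightarrow> nat \<Rightarrow> (nat \<Rightarrow> real) \<Rightarrow> op" where
  "C_beta d N \<beta> x y =
     complex_of_real (real d / real ((N + d - 1) choose N) * (real (N + d - 1) / real N)) *
     (\<Sum>a\<in>{1..N}. \<Sum>b\<in>{1..N}. \<Sum>\<sigma>\<in>Sigma_ab N a b.
        complex_of_real (\<beta> a * \<beta> b / fact (N - 1)) * ptrans0 (perm_op (Suc N) \<sigma>) x y)"

definition P_beta :: "nat \<Rightarrow> (nat \<Rightarrow> real) \<Rightarrow> op" where
  "P_beta N \<beta> x y = complex_of_real (1 / fact N) *
     (\<Sum>\<sigma>\<in>{\<sigma>. \<sigma> permutes {..<N}}. complex_of_real (\<beta> (\<sigma> 0 + 1)) * perm_op N \<sigma> x y)"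

definition T_beta :: "nat \<Rightarrow> nat \<Rightarrow> (nat \<Rightarrow> real) \<Rightarrow> (nat \<Rightarrow> nat \<Rightarrow> complex) \<Rightarrow> op" where
  "T_beta d N \<beta> \<rho> x y =
     complex_of_real (real d * real N * real (N + d - 1) / real ((N + d - 1) choose N)) *
     op_mult d N (op_mult d N (P_beta N \<beta>) (tensor_id \<rho>)) (op_transpose (P_beta N \<beta>)) x y"

text \<open>Choi matrix C_T = sum_{i,j} |i><j| (x) T(|i><j|), an operator on N+1 factors
(factor 0 = input space C^d).\<close>
definition unit_mat :: "nat \<Rightarrow> nat \<Rightarrow> nat \<Rightarrow> nat \<Rightarrow> complex" where
  "unit_mat i j = (\<lambda>k l. if k = i \<and> l = j then 1 else 0)"

definition choi :: "nat \<Rightarrow> ((nat \<Rightarrow> nat \<Rightarrow> complex) \<Rightarrow> op) \<Rightarrow> op" where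
  "choi d T x y = (\<Sum>i<d. \<Sum>j<d.
      unit_mat i j (hd x) (hd y) * T (unit_mat i j) (tl x) (tl y))"

definition psd :: "'a set \<Rightarrow> ('a \<Rightarrow> 'a \<Rightarrow> complex) \<Rightarrow> bool" where
  "psd S A \<longleftrightarrow> (\<forall>x\<in>S. \<forall>y\<in>S. A y x = cnj (A x y)) \<and>
     (\<forall>v. let q = (\<Sum>x\<in>S. \<Sum>y\<in>S. cnj (v x) * A x y * v y) in Im q = 0 \<and> Re q \<ge> 0)"

text \<open>A quantum channel from d x d matrices to operators on (C^d)^{tensor n}:
 linear, completely positive (id_k (x) T positive for every k), trace preserving.\<close>
definition quantum_channel :: "nat \<Rightarrow> nat \<Rightarrow> ((nat \<Rightarrow> nat \<Rightarrow> complex) \<Rightarrow> op) \<Rightarrow> bool" where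
  "quantum_channel d n T \<longleftrightarrow>
     (\<forall>a b X Y. \<forall>x\<in>idx d n. \<forall>y\<in>idx d n.
        T (\<lambda>i j. a * X i j + b * Y i j) x y = a * T X x y + b * T Y x y) \<and>
     (\<forall>k>0. \<forall>X :: nat \<times> nat \<Rightarrow> nat \<times> nat \<Rightarrow> complex.
        psd ({..<k} \<times> {..<d}) X \<longrightarrow>
        psd ({..<k} \<times> idx d n) (\<lambda>(a, x) (b, y). T (\<lambda>i j. X (a, i) (b, j)) x y)) \<and>
     (\<forall>X. (\<Sum>x\<in>idx d n. T X x x) = (\<Sum>i<d. X i i))"

end

theory Submission
  imports Defs
begin

lemma finite_idx[simp]: "finite (idx d n)"
  unfolding idx_def using finite_lists_length_eq[of "{..<d}" n] by (simp add: conj_commute)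

lemma idx_Suc: "idx d (Suc n) = (\<lambda>(c,w). c#w) ` ({..<d} \<times> idx d n)"
proof (rule set_eqI)
  fix xs show "xs \<in> idx d (Suc n) \<longleftrightarrow> xs \<in> (\<lambda>(c,w). c#w) ` ({..<d} \<times> idx d n)"
    by (cases xs) (auto simp: idx_def)
qed

lemma sum_idx_Suc: "(\<Sum>x\<in>idx d (Suc n). f x) = (\<Sum>c<d. \<Sum>w\<in>idx d n. f (c#w))"
proof -
  have inj: "inj_on (\<lambda>(c,w). c#w) ({..<d} \<times> idx d n)"
    by (auto simp: inj_on_def)
  show ?thesis
    unfolding idx_Suc sum.reindex[OF inj]
    by (simp add: sum.cartesian_product split_def)
qed

definition wsig :: "(nat \<Rightarrow> nat) \<Rightarrow> nat list \<Rightarrow> nat \<Rightarrow> nat list" where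
  "wsig \<sigma> x n = map (\<lambda>k. x ! \<sigma> (Suc k)) [0..<n]"

lemma perm_op_cons:
  assumes "length w = n"
  shows "perm_op (Suc n) \<sigma> x (i#w) = (if x ! (\<sigma> 0) = i \<and> w = wsig \<sigma> x n then 1 else 0)"
proof -
  have "(\<forall>j<Suc n. x ! (\<sigma> j) = (i#w) ! j) \<longleftrightarrow> (x ! (\<sigma> 0) = i \<and> w = wsig \<sigma> x n)"
    unfolding All_less_Suc2 using assms
    by (auto simp: wsig_def list_eq_iff_nth_eq)
  then show ?thesis unfolding perm_op_def by simp
qed

lemma wsig_idx:
  assumes "\<sigma> permutes {..<Suc n}" "x \<in> idx d (Suc n)"
  shows "wsig \<sigma> x n \<in> idx d n"
proof -
  have "x ! \<sigma> (Suc k) < d" if "k < n" for k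
  proof -
    have "\<sigma> (Suc k) < Suc n" using permutes_in_image[OF assms(1)] that by auto
    moreover have "length x = Suc n" "set x \<subseteq> {..<d}" using assms(2) unfolding idx_def by auto
    ultimately have "x ! \<sigma> (Suc k) \<in> set x" by simp
    then show ?thesis using \<open>set x \<subseteq> {..<d}\<close> by auto
  qed
  then show ?thesis by (auto simp: idx_def wsig_def)
qed

lemma inner_sum:
  assumes "\<sigma> permutes {..<Suc n}" "x \<in> idx d (Suc n)"
  shows "(\<Sum>w\<in>idx d n. perm_op (Suc n) \<sigma> x (i#w) * F w) =
         (if x ! (\<sigma> 0) = i then F (wsig \<sigma> x n) else 0)"
proof -
  have "(\<Sum>w\<in>idx d n. perm_op (Suc n) \<sigma> x (i#w) * F w) =
        (\<Sum>w\<in>idx d n. if w = wsig \<sigma> x n then (if x ! (\<sigma> 0) = i then F w else 0) else 0)"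
    by (rule sum.cong) (auto simp: perm_op_cons idx_def)
  also have "\<dots> = (if x ! (\<sigma> 0) = i then F (wsig \<sigma> x n) else 0)"
    using wsig_idx[OF assms] by (simp add: sum.delta')
  finally show ?thesis .
qed

definition cnd :: "nat \<Rightarrow> nat list \<Rightarrow> nat list \<Rightarrow> nat \<Rightarrow> nat \<Rightarrow> (nat \<Rightarrow> nat) \<Rightarrow> (nat \<Rightarrow> nat) \<Rightarrow> bool" where
  "cnd n x y i j \<sigma> \<tau> \<longleftrightarrow> x ! (\<sigma> 0) = i \<and> y ! (\<tau> 0) = j \<and> (\<forall>k<n. x ! \<sigma> (Suc k) = y ! \<tau> (Suc k))"

lemma inner2:
  assumes "\<sigma> permutes {..<Suc n}" "x \<in> idx d (Suc n)"
  shows "(\<Sum>w\<in>idx d n. perm_op (Suc n) \<sigma> x (i#w) * perm_op (Suc n) \<tau> y (j#w)) =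
         (if cnd n x y i j \<sigma> \<tau> then 1 else 0)"
  unfolding inner_sum[OF assms]
  by (auto simp: perm_op_cons wsig_def cnd_def list_eq_iff_nth_eq)

definition Dm :: "nat \<Rightarrow> nat \<Rightarrow> (nat \<Rightarrow> real) \<Rightarrow> nat list \<Rightarrow> nat list \<Rightarrow> nat \<Rightarrow> nat \<Rightarrow> complex" where
  "Dm d n \<beta> x y i j = (\<Sum>w\<in>idx d n. P_beta (Suc n) \<beta> x (i#w) * P_beta (Suc n) \<beta> y (j#w))"

abbreviation PS :: "nat \<Rightarrow> (nat \<Rightarrow> nat) set" where
  "PS n \<equiv> {\<sigma>. \<sigma> permutes {..<n}}"

lemma finite_PS[simp]: "finite (PS n)"
  by (rule finite_permutations) simp

definition Lsum :: "nat \<Rightarrow> (nat \<Rightarrow> real) \<Rightarrow> nat list \<Rightarrow> nat list \<Rightarrow> nat \<Rightarrow> nat \<Rightarrow> real" where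
  "Lsum n \<beta> x y i j = (\<Sum>\<sigma>\<in>PS (Suc n). \<Sum>\<tau>\<in>PS (Suc n).
      \<beta> (\<sigma> 0 + 1) * \<beta> (\<tau> 0 + 1) * (if cnd n x y i j \<sigma> \<tau> then 1 else 0))"

lemma Dm_formula:
  assumes "x \<in> idx d (Suc n)"
  shows "Dm d n \<beta> x y i j = complex_of_real ((1 / fact (Suc n))^2 * Lsum n \<beta> x y i j)"
proof -
  let ?c = "complex_of_real (1 / fact (Suc n))"
  have "Dm d n \<beta> x y i j = (\<Sum>w\<in>idx d n. ?c * ?c * (\<Sum>\<sigma>\<in>PS (Suc n). \<Sum>\<tau>\<in>PS (Suc n).
      complex_of_real (\<beta> (\<sigma> 0 + 1) * \<beta> (\<tau> 0 + 1)) *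
        (perm_op (Suc n) \<sigma> x (i#w) * perm_op (Suc n) \<tau> y (j#w))))"
    unfolding Dm_def P_beta_def
    by (rule sum.cong) (simp_all add: sum_product mult_ac)
  also have "\<dots> = ?c * ?c * (\<Sum>\<sigma>\<in>PS (Suc n). \<Sum>\<tau>\<in>PS (Suc n).
      complex_of_real (\<beta> (\<sigma> 0 + 1) * \<beta> (\<tau> 0 + 1)) *
        (\<Sum>w\<in>idx d n. perm_op (Suc n) \<sigma> x (i#w) * perm_op (Suc n) \<tau> y (j#w)))"
    by (simp add: sum_distrib_left sum.swap[of _ "idx d n"])
  also have "\<dots> = ?c * ?c * (\<Sum>\<sigma>\<in>PS (Suc n). \<Sum>\<tau>\<in>PS (Suc n).
      complex_of_real (\<beta> (\<sigma> 0 + 1) * \<beta> (\<tau> 0 + 1) * (if cnd n x y i j \<sigma> \<tau> then 1 else 0)))"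
    using inner2[OF _ assms] by (intro arg_cong2[where f="(*)"] refl sum.cong) auto
  also have "\<dots> = complex_of_real ((1 / fact (Suc n))^2 * Lsum n \<beta> x y i j)"
    by (simp add: Lsum_def power2_eq_square)
  finally show ?thesis .
qed

definition Kc :: "nat \<Rightarrow> nat \<Rightarrow> complex" where
  "Kc d N = complex_of_real (real d * real N * real (N + d - 1) / real ((N + d - 1) choose N))"

lemma T_formula:
  "T_beta d (Suc n) \<beta> \<rho> x y = Kc d (Suc n) * (\<Sum>c<d. \<Sum>e<d. \<rho> c e * Dm d n \<beta> x y c e)"
proof -
  let ?P = "P_beta (Suc n) \<beta>"
  have inner: "(\<Sum>u\<in>idx d (Suc n). ?P x u * tensor_id \<rho> u (e#w')) = (\<Sum>c<d. ?P x (c#w') * \<rho> c e)"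
    if "w' \<in> idx d n" for e w'
  proof -
    have "(\<Sum>u\<in>idx d (Suc n). ?P x u * tensor_id \<rho> u (e#w')) =
      (\<Sum>c<d. \<Sum>w\<in>idx d n. if w = w' then ?P x (c#w') * \<rho> c e else 0)"
      unfolding sum_idx_Suc tensor_id_def by (intro sum.cong) auto
    also have "\<dots> = (\<Sum>c<d. ?P x (c#w') * \<rho> c e)"
      using that by (simp add: sum.delta')
    finally show ?thesis .
  qed
  have "op_mult d (Suc n) (op_mult d (Suc n) ?P (tensor_id \<rho>)) (op_transpose ?P) x y =
     (\<Sum>e<d. \<Sum>w\<in>idx d n. (\<Sum>c<d. ?P x (c#w) * \<rho> c e) * ?P y (e#w))"
    unfolding op_mult_def op_transpose_def
    using sum_idx_Suc[of "\<lambda>v. (\<Sum>u\<in>idx d (Suc n). ?P x u * tensor_id \<rho> u v) * ?P y v" d n]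
      inner by simp
  also have "\<dots> = (\<Sum>e<d. \<Sum>c<d. \<Sum>w\<in>idx d n. \<rho> c e * (?P x (c#w) * ?P y (e#w)))"
    unfolding sum_distrib_right
    by (intro sum.cong refl, subst sum.swap) (simp add: mult_ac)
  also have "\<dots> = (\<Sum>c<d. \<Sum>e<d. \<rho> c e * Dm d n \<beta> x y c e)"
    unfolding Dm_def sum_distrib_left by (rule sum.swap)
  finally show ?thesis unfolding T_beta_def Kc_def by simp
qed

lemma sum_perm_at:
  assumes "finite S" "z \<notin> S"
  shows "(\<Sum>p\<in>{p. p permutes insert z S}. (h (p z) :: real)) = fact (card S) * (\<Sum>b\<in>insert z S. h b)"
proof -
  have "(\<Sum>p\<in>{p. p permutes insert z S}. h (p z)) =
     (\<Sum>b\<in>insert z S. \<Sum>q\<in>{p. p permutes S}. h ((Transposition.transpose z b \<circ> q) z))"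
    by (rule sum_over_permutations_insert[OF assms])
  also have "\<dots> = (\<Sum>b\<in>insert z S. \<Sum>q\<in>{p. p permutes S}. h b)"
    using assms(2) by (intro sum.cong refl) (simp add: permutes_not_in)
  also have "\<dots> = (\<Sum>b\<in>insert z S. fact (card S) * h b)"
    using card_permutations[OF refl assms(1)] by simp
  finally show ?thesis by (simp add: sum_distrib_left)
qed

lemma permutes_by_inverse:
  assumes "\<And>x. x \<notin> S \<Longrightarrow> f x = x" "\<And>x. g (f x) = x" "\<And>y. f (g y) = y"
  shows "f permutes S"
  unfolding permutes_def using assms by metis

definition shift :: "(nat \<Rightarrow> nat) \<Rightarrow> nat \<Rightarrow> nat" where
  "shift \<pi> l = (case l of 0 \<Rightarrow> 0 | Suc m \<Rightarrow> Suc (\<pi> m))"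

lemma shift_simps[simp]: "shift \<pi> 0 = 0" "shift \<pi> (Suc m) = Suc (\<pi> m)"
  by (simp_all add: shift_def)

lemma shift_permutes:
  assumes "\<pi> permutes {..<N}"
  shows "shift \<pi> permutes {..N}"
proof (rule permutes_by_inverse[where g="shift (inv \<pi>)"])
  fix x assume "x \<notin> {..N}"
  then obtain m where "x = Suc m" "m \<ge> N" by (cases x) auto
  then show "shift \<pi> x = x" using permutes_not_in[OF assms] by simp
next
  fix x show "shift (inv \<pi>) (shift \<pi> x) = x"
    by (cases x) (simp_all add: permutes_inverses[OF assms])
next
  fix x show "shift \<pi> (shift (inv \<pi>) x) = x"
    by (cases x) (simp_all add: permutes_inverses[OF assms])
qed

lemma transpose01[simp]:
  "Transposition.transpose (0::nat) 1 0 = 1" "Transposition.transpose (0::nat) 1 (Suc 0) = 0"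
  "Transposition.transpose (0::nat) 1 (Suc (Suc k)) = Suc (Suc k)"
  by (simp_all add: Transposition.transpose_def)

definition pc :: "nat \<Rightarrow> nat list \<Rightarrow> nat list \<Rightarrow> nat \<Rightarrow> nat \<Rightarrow> (nat \<Rightarrow> nat) \<Rightarrow> bool" where
  "pc N x y i j \<rho> \<longleftrightarrow> (\<forall>l<Suc N. (j#x) ! (\<rho> l) = (i#y) ! l)"

lemma card_perm_at:
  assumes "a \<le> M"
  shows "card {\<rho>. \<rho> permutes {..M} \<and> \<rho> 0 = a} = fact M"
proof -
  have ins: "{..M} = insert 0 {1..M}" by auto
  have fin: "finite {\<rho>. \<rho> permutes {..M}}" by (rule finite_permutations) simp
  have one: "(\<Sum>b\<in>{..M}. if b = a then 1 else 0) = (1::real)" using assms by (subst sum.delta) auto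
  have "real (card {\<rho>. \<rho> permutes {..M} \<and> \<rho> 0 = a}) =
        (\<Sum>\<rho>\<in>{\<rho>. \<rho> permutes {..M}}. if \<rho> 0 = a then 1 else 0)"
    using sum.inter_filter[OF fin, of "\<lambda>_. (1::real)" "\<lambda>\<rho>. \<rho> 0 = a"] by simp
  also have "\<dots> = fact M * (\<Sum>b\<in>{..M}. if b = a then 1 else 0)"
    using sum_perm_at[of "{1..M}" 0 "\<lambda>b. if b = a then 1 else 0"] unfolding ins[symmetric] by simp
  also have "\<dots> = fact M" using one by simp
  finally have "real (card {\<rho>. \<rho> permutes {..M} \<and> \<rho> 0 = a}) = real (fact M)" by simp
  then show ?thesis by (simp only: of_nat_eq_iff)
qed

lemma choi_step1:
  assumes \<sigma>: "\<sigma> permutes {..<Suc n}"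
  shows "(\<Sum>\<tau>\<in>PS (Suc n). \<beta> (\<tau> 0 + 1) * (if cnd n x y i j \<sigma> \<tau> then 1 else 0)) =
         (\<Sum>b\<in>{1..Suc n}. \<Sum>\<rho>\<in>Sigma_ab (Suc n) (Suc (\<sigma> 0)) b.
             \<beta> b * (if pc (Suc n) x y i j \<rho> then 1 else 0))"
proof -
  define t where "t = Transposition.transpose (0::nat) 1"
  define \<Phi> where "\<Phi> \<tau> = shift \<sigma> \<circ> t \<circ> inv (shift \<tau>)" for \<tau>
  define R where "R = {\<rho>. \<rho> permutes {..Suc n} \<and> \<rho> 0 = Suc (\<sigma> 0)}"
  define f where "f \<rho> = \<beta> (inv \<rho> 0) * (if pc (Suc n) x y i j \<rho> then 1 else 0)" for \<rho>
  have tp: "t permutes {..Suc n}" unfolding t_def by (rule permutes_swap_id) auto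
  have ss: "shift \<sigma> permutes {..Suc n}" by (rule shift_permutes[OF \<sigma>])
  have L1: "\<Phi> \<tau> permutes {..Suc n}" if "\<tau> \<in> PS (Suc n)" for \<tau>
    unfolding \<Phi>_def
    using permutes_compose[OF permutes_inv[OF shift_permutes] permutes_compose[OF tp ss]] that by auto
  have inv0: "inv (shift \<tau>) 0 = 0" if "\<tau> \<in> PS (Suc n)" for \<tau>
    using permutes_inv_eq[OF shift_permutes, of \<tau> "Suc n"] that by auto
  have L2: "\<Phi> \<tau> 0 = Suc (\<sigma> 0)" if "\<tau> \<in> PS (Suc n)" for \<tau>
    using inv0[OF that] by (simp add: \<Phi>_def t_def)
  have L3: "\<Phi> \<tau> (Suc (\<tau> 0)) = 0" if "\<tau> \<in> PS (Suc n)" for \<tau>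
  proof -
    have "inv (shift \<tau>) (Suc (\<tau> 0)) = Suc 0"
      using permutes_inv_eq[OF shift_permutes, of \<tau> "Suc n"] that by auto
    then show ?thesis by (simp add: \<Phi>_def t_def)
  qed
  have L3': "inv (\<Phi> \<tau>) 0 = Suc (\<tau> 0)" if "\<tau> \<in> PS (Suc n)" for \<tau>
    using permutes_inv_eq[OF L1[OF that]] L3[OF that] by simp
  have L4: "inj_on \<Phi> (PS (Suc n))"
  proof (rule inj_onI)
    fix \<tau>1 \<tau>2 assume t1: "\<tau>1 \<in> PS (Suc n)" and t2: "\<tau>2 \<in> PS (Suc n)" and eq: "\<Phi> \<tau>1 = \<Phi> \<tau>2"
    have "inv (shift \<tau>1) l = inv (shift \<tau>2) l" for l
    proof -
      have "shift \<sigma> (t (inv (shift \<tau>1) l)) = shift \<sigma> (t (inv (shift \<tau>2) l))"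
        using eq unfolding \<Phi>_def by (metis comp_apply)
      then show ?thesis using permutes_inj[OF ss] permutes_inj[OF tp] by (auto dest: injD)
    qed
    then have "inv (shift \<tau>1) = inv (shift \<tau>2)" by auto
    moreover have "inv (inv (shift \<tau>1)) = shift \<tau>1"
      by (rule permutes_inv_inv[OF shift_permutes]) (use t1 in simp)
    moreover have "inv (inv (shift \<tau>2)) = shift \<tau>2"
      by (rule permutes_inv_inv[OF shift_permutes]) (use t2 in simp)
    ultimately have ss12: "shift \<tau>1 = shift \<tau>2" by metis
    have "\<tau>1 m = \<tau>2 m" for m
    proof -
      have "shift \<tau>1 (Suc m) = shift \<tau>2 (Suc m)" using ss12 by simp
      then show ?thesis by simp
    qed
    then show "\<tau>1 = \<tau>2" by auto
  qed
  have finR: "finite R" unfolding R_def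
    by (rule finite_subset[OF _ finite_permutations[of "{..Suc n}"]]) auto
  have L5: "\<Phi> ` PS (Suc n) = R"
  proof (rule card_subset_eq[OF finR])
    show "\<Phi> ` PS (Suc n) \<subseteq> R" using L1 L2 unfolding R_def by auto
    have "\<sigma> 0 < Suc n" using permutes_in_image[OF \<sigma>] by auto
    then have "card R = fact (Suc n)" unfolding R_def by (intro card_perm_at) auto
    moreover have "card (\<Phi> ` PS (Suc n)) = fact (Suc n)"
      using card_image[OF L4] card_permutations[of "{..<Suc n}" "Suc n"] by simp
    ultimately show "card (\<Phi> ` PS (Suc n)) = card R" by simp
  qed
  have L6: "pc (Suc n) x y i j (\<Phi> \<tau>) \<longleftrightarrow> cnd n x y i j \<sigma> \<tau>" if "\<tau> \<in> PS (Suc n)" for \<tau>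
  proof -
    have st: "shift \<tau> permutes {..Suc n}" using shift_permutes that by auto
    have img: "shift \<tau> ` {..Suc n} = {..Suc n}" by (rule permutes_image[OF st])
    let ?Q = "\<lambda>l. (j#x) ! (\<Phi> \<tau> l) = (i#y) ! l"
    have "pc (Suc n) x y i j (\<Phi> \<tau>) \<longleftrightarrow> (\<forall>l\<in>{..Suc n}. ?Q l)"
      unfolding pc_def by (auto simp: less_Suc_eq_le)
    also have "\<dots> \<longleftrightarrow> (\<forall>m\<in>{..Suc n}. ?Q (shift \<tau> m))"
    proof
      assume "\<forall>l\<in>{..Suc n}. ?Q l" then show "\<forall>m\<in>{..Suc n}. ?Q (shift \<tau> m)"
        using img by auto
    next
      assume "\<forall>m\<in>{..Suc n}. ?Q (shift \<tau> m)" then show "\<forall>l\<in>{..Suc n}. ?Q l"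
        using img by (metis imageE)
    qed
    also have "\<dots> \<longleftrightarrow> (\<forall>m<Suc (Suc n). (j#x) ! (shift \<sigma> (t m)) = (i#y) ! (shift \<tau> m))"
      unfolding \<Phi>_def by (auto simp: permutes_inverses(2)[OF st] less_Suc_eq_le)
    also have "\<dots> \<longleftrightarrow> cnd n x y i j \<sigma> \<tau>"
      unfolding All_less_Suc2 cnd_def by (auto simp: t_def)
    finally show ?thesis .
  qed
  have "(\<Sum>\<tau>\<in>PS (Suc n). \<beta> (\<tau> 0 + 1) * (if cnd n x y i j \<sigma> \<tau> then 1 else 0)) =
        (\<Sum>\<tau>\<in>PS (Suc n). f (\<Phi> \<tau>))"
    using L3' L6 by (intro sum.cong) (auto simp: f_def)
  also have "\<dots> = (\<Sum>\<rho>\<in>R. f \<rho>)"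
    using sum.reindex[OF L4, of f] L5 by simp
  also have "\<dots> = (\<Sum>b\<in>{1..Suc n}. \<Sum>\<rho>\<in>{\<rho>\<in>R. inv \<rho> 0 = b}. f \<rho>)"
  proof (rule sum.group[symmetric, OF finR])
    show "finite {1..Suc n}" by simp
    show "(\<lambda>\<rho>. inv \<rho> 0) ` R \<subseteq> {1..Suc n}"
    proof
      fix b assume "b \<in> (\<lambda>\<rho>. inv \<rho> 0) ` R"
      then obtain \<rho> where r: "\<rho> \<in> R" "b = inv \<rho> 0" by auto
      then have rp: "\<rho> permutes {..Suc n}" "\<rho> 0 = Suc (\<sigma> 0)" unfolding R_def by auto
      have "\<rho> b = 0" using permutes_inverses(1)[OF rp(1)] r by simp
      then have "b \<noteq> 0" using rp by (metis nat.distinct(1))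
      moreover have "b \<in> {..Suc n}" using permutes_in_image[OF permutes_inv[OF rp(1)]] r by auto
      ultimately show "b \<in> {1..Suc n}" by auto
    qed
  qed
  also have "\<dots> = (\<Sum>b\<in>{1..Suc n}. \<Sum>\<rho>\<in>Sigma_ab (Suc n) (Suc (\<sigma> 0)) b.
             \<beta> b * (if pc (Suc n) x y i j \<rho> then 1 else 0))"
  proof -
    have eqs: "{\<rho>\<in>R. inv \<rho> 0 = b} = Sigma_ab (Suc n) (Suc (\<sigma> 0)) b" for b
    proof (rule set_eqI)
      fix \<rho> show "\<rho> \<in> {\<rho>\<in>R. inv \<rho> 0 = b} \<longleftrightarrow> \<rho> \<in> Sigma_ab (Suc n) (Suc (\<sigma> 0)) b"
      proof (cases "\<rho> permutes {..Suc n}")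
        case True then show ?thesis using permutes_inv_eq[OF True, of 0 b]
          unfolding R_def Sigma_ab_def by auto
      next
        case False then show ?thesis unfolding R_def Sigma_ab_def by auto
      qed
    qed
    have fs: "f \<rho> = \<beta> b * (if pc (Suc n) x y i j \<rho> then 1 else 0)"
      if "\<rho> \<in> Sigma_ab (Suc n) (Suc (\<sigma> 0)) b" for \<rho> b
    proof -
      have "\<rho> permutes {..Suc n}" "\<rho> b = 0" using that unfolding Sigma_ab_def by auto
      then have "inv \<rho> 0 = b" using permutes_inv_eq by metis
      then show ?thesis unfolding f_def by simp
    qed
    show ?thesis unfolding eqs using fs by (intro sum.cong refl) simp
  qed
  finally show ?thesis .
qed

lemma Lsum_choi:
  "Lsum n \<beta> x y i j = fact n * (\<Sum>a\<in>{1..Suc n}. \<Sum>b\<in>{1..Suc n}. \<Sum>\<rho>\<in>Sigma_ab (Suc n) a b.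
      \<beta> a * \<beta> b * (if pc (Suc n) x y i j \<rho> then 1 else 0))"
proof -
  define h where "h a = \<beta> (a + 1) * (\<Sum>b\<in>{1..Suc n}. \<Sum>\<rho>\<in>Sigma_ab (Suc n) (Suc a) b.
             \<beta> b * (if pc (Suc n) x y i j \<rho> then 1 else 0))" for a
  have ins: "{..<Suc n} = insert 0 {1..<Suc n}" by auto
  have "Lsum n \<beta> x y i j = (\<Sum>\<sigma>\<in>PS (Suc n). h (\<sigma> 0))"
    unfolding Lsum_def
  proof (intro sum.cong refl)
    fix \<sigma> assume \<sigma>: "\<sigma> \<in> PS (Suc n)"
    have "(\<Sum>\<tau>\<in>PS (Suc n). \<beta> (\<sigma> 0 + 1) * \<beta> (\<tau> 0 + 1) * (if cnd n x y i j \<sigma> \<tau> then 1 else 0)) =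
      \<beta> (\<sigma> 0 + 1) * (\<Sum>\<tau>\<in>PS (Suc n). \<beta> (\<tau> 0 + 1) * (if cnd n x y i j \<sigma> \<tau> then 1 else 0))"
      by (simp add: sum_distrib_left mult.assoc)
    also have "\<dots> = h (\<sigma> 0)" unfolding h_def choi_step1[of \<sigma>, OF \<sigma>[simplified]] ..
    finally show "(\<Sum>\<tau>\<in>PS (Suc n). \<beta> (\<sigma> 0 + 1) * \<beta> (\<tau> 0 + 1) * (if cnd n x y i j \<sigma> \<tau> then 1 else 0)) = h (\<sigma> 0)" .
  qed
  also have "\<dots> = fact n * (\<Sum>a\<in>{..<Suc n}. h a)"
    using sum_perm_at[of "{1..<Suc n}" 0 h] unfolding ins[symmetric] by simp
  also have "(\<Sum>a\<in>{..<Suc n}. h a) = (\<Sum>a\<in>{1..Suc n}. h (a - 1))"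
    using sum.atLeast1_atMost_eq[of "\<lambda>a. h (a - 1)" "Suc n"] by simp
  also have "\<dots> = (\<Sum>a\<in>{1..Suc n}. \<Sum>b\<in>{1..Suc n}. \<Sum>\<rho>\<in>Sigma_ab (Suc n) a b.
      \<beta> a * \<beta> b * (if pc (Suc n) x y i j \<rho> then 1 else 0))"
  proof (intro sum.cong refl)
    fix a assume "a \<in> {1..Suc n}"
    then have a: "a - 1 + 1 = a" "Suc (a - 1) = a" by auto
    show "h (a - 1) = (\<Sum>b\<in>{1..Suc n}. \<Sum>\<rho>\<in>Sigma_ab (Suc n) a b.
      \<beta> a * \<beta> b * (if pc (Suc n) x y i j \<rho> then 1 else 0))"
      unfolding h_def a by (simp only: sum_distrib_left mult.assoc)
  qed
  finally show ?thesis .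
qed

lemma if01_mult[simp]: "(if P then 1 else 0) * (x::complex) = (if P then x else 0)" by simp

lemma double_delta:
  fixes i j d :: nat
  assumes "i < d" "j < d"
  shows "(\<Sum>a<d. \<Sum>b<d. (if i = a \<and> j = b then 1 else 0) * F a b) = (F i j :: complex)"
proof -
  have "(\<Sum>a<d. \<Sum>b<d. (if i = a \<and> j = b then 1 else 0) * F a b) = (\<Sum>a<d. if i = a then F a j else 0)"
  proof (intro sum.cong refl)
    fix a show "(\<Sum>b<d. (if i = a \<and> j = b then 1 else 0) * F a b) = (if i = a then F a j else 0)"
    proof (cases "a = i")
      case True
      have "(\<Sum>b<d. (if i = a \<and> j = b then 1 else 0) * F a b) = (\<Sum>b<d. if j = b then F a b else 0)"
        by (intro sum.cong refl) (simp add: True)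
      also have "\<dots> = F a j" using assms by (subst sum.delta') auto
      finally show ?thesis using True by simp
    qed simp
  qed
  also have "\<dots> = F i j" using assms by (simp add: sum.delta sum.delta')
  finally show ?thesis .
qed

lemma double_delta':
  fixes i j d :: nat
  assumes "i < d" "j < d"
  shows "(\<Sum>a<d. \<Sum>b<d. (if a = i \<and> b = j then F a b else 0)) = (F i j :: complex)"
  using double_delta[OF assms, of F] by (simp add: eq_commute)

lemma idx_cons: "c # w \<in> idx d (Suc n) \<longleftrightarrow> c < d \<and> w \<in> idx d n"
  by (auto simp: idx_def)

lemma idx_Suc_cases:
  assumes "x \<in> idx d (Suc n)"
  obtains c w where "x = c # w" "c < d" "w \<in> idx d n"
  using assms by (cases x) (auto simp: idx_def)

lemma arith1:
  fixes a p b C F S :: real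
  assumes "F > 0" "p > 0"
  shows "a * p * b / C * ((1 / (F * p))^2 * (F * S)) = a / C * (b / p) * (S / F)"
  using assms by (cases "C = 0") (simp_all add: field_simps power2_eq_square)

lemma choi_part:
  assumes "x \<in> idx d (Suc (Suc n))" "y \<in> idx d (Suc (Suc n))"
  shows "choi d (T_beta d (Suc n) \<beta>) x y = C_beta d (Suc n) \<beta> x y"
proof -
  obtain i x' where x: "x = i # x'" "i < d" "x' \<in> idx d (Suc n)" using idx_Suc_cases[OF assms(1)] by blast
  obtain j y' where y: "y = j # y'" "j < d" "y' \<in> idx d (Suc n)" using idx_Suc_cases[OF assms(2)] by blast
  define S where "S = (\<Sum>a\<in>{1..Suc n}. \<Sum>b\<in>{1..Suc n}. \<Sum>\<rho>\<in>Sigma_ab (Suc n) a b.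
      \<beta> a * \<beta> b * (if pc (Suc n) x' y' i j \<rho> then 1 else 0))"
  have "choi d (T_beta d (Suc n) \<beta>) x y = T_beta d (Suc n) \<beta> (unit_mat i j) x' y'"
    unfolding choi_def using x y double_delta[of i d j] by (simp add: unit_mat_def)
  also have "\<dots> = Kc d (Suc n) * Dm d n \<beta> x' y' i j"
    unfolding T_formula using x y double_delta'[of i d j] by (simp add: unit_mat_def)
  also have "\<dots> = Kc d (Suc n) * complex_of_real ((1 / fact (Suc n))^2 * (fact n * S))"
    unfolding Dm_formula[OF x(3)] Lsum_choi S_def ..
  also have "\<dots> = complex_of_real (real d / real ((Suc n + d - 1) choose Suc n) * (real (Suc n + d - 1) / real (Suc n)) * (S / fact n))"
    unfolding Kc_def of_real_mult[symmetric]
  proof (rule arg_cong[where f=complex_of_real])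
    have F: "(fact n :: real) > 0" by simp
    have fs: "(fact (Suc n) :: real) = fact n * real (Suc n)" by (simp add: fact_Suc)
    show "real d * real (Suc n) * real (Suc n + d - 1) / real (Suc n + d - 1 choose Suc n) *
      ((1 / fact (Suc n))\<^sup>2 * (fact n * S)) =
      real d / real (Suc n + d - 1 choose Suc n) * (real (Suc n + d - 1) / real (Suc n)) * (S / fact n)"
      unfolding fs by (rule arith1[OF F]) simp
  qed
  also have "\<dots> = C_beta d (Suc n) \<beta> x y"
  proof -
    have ptr: "ptrans0 (perm_op (Suc (Suc n)) \<rho>) x y = (if pc (Suc n) x' y' i j \<rho> then 1 else 0)" for \<rho>
      unfolding ptrans0_def perm_op_def pc_def x y by simp
    then have "C_beta d (Suc n) \<beta> x y = complex_of_real (real d / real ((Suc n + d - 1) choose Suc n) * (real (Suc n + d - 1) / real (Suc n))) *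
      (\<Sum>a\<in>{1..Suc n}. \<Sum>b\<in>{1..Suc n}. \<Sum>\<rho>\<in>Sigma_ab (Suc n) a b.
        complex_of_real (\<beta> a * \<beta> b / fact n * (if pc (Suc n) x' y' i j \<rho> then 1 else 0)))"
      unfolding C_beta_def
      by (intro arg_cong2[where f="(*)"] refl sum.cong) (auto simp: ptr)
    also have "\<dots> = complex_of_real (real d / real ((Suc n + d - 1) choose Suc n) * (real (Suc n + d - 1) / real (Suc n)) * (S / fact n))"
      unfolding S_def of_real_sum[symmetric] of_real_mult[symmetric] sum_divide_distrib
      by (simp add: mult_ac)
    finally show ?thesis ..
  qed
  finally show ?thesis .
qed

definition FX :: "nat \<Rightarrow> nat set \<Rightarrow> (nat \<Rightarrow> nat) \<Rightarrow> (nat \<Rightarrow> nat) set" where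
  "FX d S \<mu> = {f \<in> PiE S (\<lambda>_. {..<d}). \<forall>k\<in>S. f (\<mu> k) = f k}"

lemma finite_FX[simp]: "finite S \<Longrightarrow> finite (FX d S \<mu>)"
  unfolding FX_def by (rule finite_subset[OF _ finite_PiE[of S "\<lambda>_. {..<d}"]]) auto

lemma inj_upd:
  assumes "a \<notin> S"
  shows "inj_on (\<lambda>g. g(a := v g)) (PiE S X)"
proof (rule inj_onI)
  fix g1 g2 assume g: "g1 \<in> PiE S X" "g2 \<in> PiE S X" and eq: "g1(a := v g1) = g2(a := v g2)"
  show "g1 = g2"
  proof
    fix k show "g1 k = g2 k"
    proof (cases "k = a")
      case True then show ?thesis using g assms by (auto simp: PiE_def extensional_def)
    next
      case False then show ?thesis using eq by (metis fun_upd_other)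
    qed
  qed
qed

lemma FX_swap:
  assumes aS: "a \<notin> S" and bS: "b \<in> S" and q: "q permutes S"
  shows "FX d (insert a S) (Transposition.transpose a b \<circ> q) = (\<lambda>g. g(a := g b)) ` FX d S q"
proof -
  let ?t = "Transposition.transpose a b"
  have qa: "q a = a" using permutes_not_in[OF q aS] .
  have qS: "q k \<in> S" if "k \<in> S" for k using permutes_in_image[OF q] that by simp
  have ft: "f (?t z) = f z" if "f a = f b" for f :: "nat \<Rightarrow> nat" and z
    using that by (auto simp: Transposition.transpose_def)
  show ?thesis
  proof (rule set_eqI, rule iffI)
    fix f assume f: "f \<in> FX d (insert a S) (?t \<circ> q)"
    then have fab: "f b = f a" using qa unfolding FX_def by auto
    define g where "g = f(a := undefined)"
    have "g \<in> FX d S q"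
      unfolding FX_def
    proof (intro CollectI conjI ballI)
      show "g \<in> PiE S (\<lambda>_. {..<d})" using f aS unfolding FX_def g_def by (auto simp: PiE_def extensional_def)
      fix k assume k: "k \<in> S"
      have "f (?t (q k)) = f k" using f k unfolding FX_def by auto
      then have "f (q k) = f k" using ft[of f "q k"] fab by simp
      then show "g (q k) = g k" using qS[OF k] k aS unfolding g_def by auto
    qed
    moreover have "f = g(a := g b)" using fab bS aS unfolding g_def by (auto simp: fun_eq_iff)
    ultimately show "f \<in> (\<lambda>g. g(a := g b)) ` FX d S q" by blast
  next
    fix f assume "f \<in> (\<lambda>g. g(a := g b)) ` FX d S q"
    then obtain g where g: "g \<in> FX d S q" and fg: "f = g(a := g b)" by blast
    have fab: "f a = f b" using fg aS bS by auto
    show "f \<in> FX d (insert a S) (?t \<circ> q)"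
      unfolding FX_def
    proof (intro CollectI conjI ballI)
      show "f \<in> PiE (insert a S) (\<lambda>_. {..<d})" using g bS aS fg unfolding FX_def by (auto simp: PiE_def extensional_def)
      fix k assume k: "k \<in> insert a S"
      have "f (q k) = f k"
      proof (cases "k = a")
        case True then show ?thesis using qa by simp
      next
        case False then have "k \<in> S" using k by simp
        then show ?thesis using g qS[of k] aS fg unfolding FX_def by auto
      qed
      then show "f ((?t \<circ> q) k) = f k" using ft[OF fab] by simp
    qed
  qed
qed

lemma FX_fix:
  assumes aS: "a \<notin> S" and q: "q permutes S"
  shows "FX d (insert a S) q = (\<lambda>(g, c). g(a := c)) ` (FX d S q \<times> {..<d})"
proof -
  have qa: "q a = a" using permutes_not_in[OF q aS] .
  have qS: "q k \<in> S" if "k \<in> S" for k using permutes_in_image[OF q] that by simp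
  show ?thesis
  proof (rule set_eqI, rule iffI)
    fix f assume f: "f \<in> FX d (insert a S) q"
    define g where "g = f(a := undefined)"
    have "g \<in> FX d S q"
      unfolding FX_def
    proof (intro CollectI conjI ballI)
      show "g \<in> PiE S (\<lambda>_. {..<d})" using f aS unfolding FX_def g_def by (auto simp: PiE_def extensional_def)
      fix k assume k: "k \<in> S"
      have "f (q k) = f k" using f k unfolding FX_def by auto
      then show "g (q k) = g k" using qS[OF k] k aS unfolding g_def by auto
    qed
    moreover have "f a < d" using f unfolding FX_def by auto
    moreover have "f = g(a := f a)" unfolding g_def by auto
    ultimately show "f \<in> (\<lambda>(g, c). g(a := c)) ` (FX d S q \<times> {..<d})"
      by (intro image_eqI[where x="(g, f a)"]) auto
  next
    fix f assume "f \<in> (\<lambda>(g, c). g(a := c)) ` (FX d S q \<times> {..<d})"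
    then obtain g c where g: "g \<in> FX d S q" "c < d" and fg: "f = g(a := c)" by auto
    show "f \<in> FX d (insert a S) q"
      unfolding FX_def
    proof (intro CollectI conjI ballI)
      show "f \<in> PiE (insert a S) (\<lambda>_. {..<d})" using g aS fg unfolding FX_def by (auto simp: PiE_def extensional_def)
      fix k assume k: "k \<in> insert a S"
      show "f (q k) = f k"
      proof (cases "k = a")
        case True then show ?thesis using qa by simp
      next
        case False then have "k \<in> S" using k by simp
        then show ?thesis using g qS[of k] aS fg unfolding FX_def by auto
      qed
    qed
  qed
qed

lemma FX_sub: "FX d S q \<subseteq> PiE S (\<lambda>_. {..<d})" unfolding FX_def by auto

lemma card_FX_swap:
  assumes "finite S" "a \<notin> S" "b \<in> S" "q permutes S"
  shows "card (FX d (insert a S) (Transposition.transpose a b \<circ> q)) = card (FX d S q)"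
  unfolding FX_swap[OF assms(2-4)]
  by (rule card_image, rule inj_on_subset[OF inj_upd[OF assms(2)] FX_sub])

lemma card_FX_fix:
  assumes "finite S" "a \<notin> S" "q permutes S"
  shows "card (FX d (insert a S) q) = card (FX d S q) * d"
proof -
  have "inj_on (\<lambda>(g, c). g(a := c)) (FX d S q \<times> {..<d})"
  proof (rule inj_onI, clarify)
    fix g1 c1 g2 c2 assume g: "g1 \<in> FX d S q" "g2 \<in> FX d S q" and eq: "g1(a := c1) = g2(a := c2)"
    have "c1 = c2" using fun_cong[OF eq, of a] by simp
    moreover have "g1 = g2"
    proof
      fix k show "g1 k = g2 k"
      proof (cases "k = a")
        case True
        have "g1 a = undefined" "g2 a = undefined"
          using g assms(2) unfolding FX_def by (auto simp: PiE_def extensional_def)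
        then show ?thesis using True by simp
      next
        case False then show ?thesis using fun_cong[OF eq, of k] by simp
      qed
    qed
    ultimately show "g1 = g2 \<and> c1 = c2" by simp
  qed
  then show ?thesis unfolding FX_fix[OF assms(2,3)] by (simp add: card_image card_cartesian_product)
qed

lemma G_formula:
  assumes "finite S"
  shows "(\<Sum>\<mu>\<in>{\<mu>. \<mu> permutes S}. card (FX d S \<mu>)) = (\<Prod>k<card S. d + k)"
  using assms
proof (induction S rule: finite_induct)
  case empty
  have "FX d {} (\<lambda>a. a) = {\<lambda>_. undefined}" unfolding FX_def by auto
  then show ?case by (simp add: id_def)
next
  case (insert a S)
  have "(\<Sum>\<mu>\<in>{\<mu>. \<mu> permutes insert a S}. card (FX d (insert a S) \<mu>)) =
    (\<Sum>b\<in>insert a S. \<Sum>q\<in>{p. p permutes S}. card (FX d (insert a S) (Transposition.transpose a b \<circ> q)))"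
    by (rule sum_over_permutations_insert[OF insert.hyps(1,2)])
  also have "\<dots> = (\<Sum>q\<in>{p. p permutes S}. card (FX d (insert a S) q)) +
     (\<Sum>b\<in>S. \<Sum>q\<in>{p. p permutes S}. card (FX d (insert a S) (Transposition.transpose a b \<circ> q)))"
    using insert.hyps by (simp add: sum.insert)
  also have "\<dots> = (\<Sum>q\<in>{p. p permutes S}. card (FX d S q) * d) +
     (\<Sum>b\<in>S. \<Sum>q\<in>{p. p permutes S}. card (FX d S q))"
    using insert.hyps card_FX_fix card_FX_swap by (intro arg_cong2[where f="(+)"] sum.cong refl) auto
  also have "\<dots> = (d + card S) * (\<Prod>k<card S. d + k)"
    using insert.IH by (simp add: sum_distrib_right[symmetric] sum_distrib_left[symmetric] algebra_simps)
  also have "\<dots> = (\<Prod>k<card (insert a S). d + k)"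
    using insert.hyps by simp
  finally show ?case .
qed

lemma card_H1:
  assumes "a \<notin> S" "q permutes S" "c < d"
  shows "card {f \<in> FX d (insert a S) q. f a = c} = card (FX d S q)"
proof -
  have "{f \<in> FX d (insert a S) q. f a = c} = (\<lambda>g. g(a := c)) ` FX d S q"
    unfolding FX_fix[OF assms(1,2)] using assms(3) by auto
  then show ?thesis
    using card_image[OF inj_on_subset[OF inj_upd[OF assms(1), of "\<lambda>_. c"] FX_sub]] by simp
qed

lemma card_H2:
  assumes "a \<notin> S" "b \<in> S" "q permutes S"
  shows "card {f \<in> FX d (insert a S) (Transposition.transpose a b \<circ> q). f a = c} = card {g \<in> FX d S q. g b = c}"
proof -
  have eq: "{f \<in> FX d (insert a S) (Transposition.transpose a b \<circ> q). f a = c} = (\<lambda>g. g(a := g b)) ` {g \<in> FX d S q. g b = c}"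
    unfolding FX_swap[OF assms] by auto
  have sub: "{g \<in> FX d S q. g b = c} \<subseteq> PiE S (\<lambda>_. {..<d})" using FX_sub by blast
  show ?thesis unfolding eq
    by (rule card_image, rule inj_on_subset[OF inj_upd[OF assms(1)] sub])
qed

lemma card_V_le:
  assumes "finite S" "b \<in> S" "q permutes S" "c < d" "c' < d"
  shows "card {g \<in> FX d S q. g b = c} \<le> card {g \<in> FX d S q. g b = c'}"
proof -
  define \<phi> where "\<phi> g = (\<lambda>k. if k \<in> S then Transposition.transpose c c' (g k) else undefined)" for g :: "nat \<Rightarrow> nat"
  have qS: "q k \<in> S" if "k \<in> S" for k using permutes_in_image[OF assms(3)] that by simp
  have tr: "Transposition.transpose c c' z < d" if "z < d" for z
    using that assms(4,5) by (auto simp: Transposition.transpose_def)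
  show ?thesis
  proof (rule card_inj_on_le)
    show "inj_on \<phi> {g \<in> FX d S q. g b = c}"
    proof (rule inj_onI)
      fix g1 g2 assume g: "g1 \<in> {g \<in> FX d S q. g b = c}" "g2 \<in> {g \<in> FX d S q. g b = c}" and eq: "\<phi> g1 = \<phi> g2"
      show "g1 = g2"
      proof
        fix k show "g1 k = g2 k"
        proof (cases "k \<in> S")
          case True
          then have "Transposition.transpose c c' (g1 k) = Transposition.transpose c c' (g2 k)"
            using fun_cong[OF eq, of k] unfolding \<phi>_def by simp
          then show ?thesis by (metis transpose_involutory)
        next
          case False then show ?thesis using g unfolding FX_def by (auto simp: PiE_def extensional_def)
        qed
      qed
    qed
    show "\<phi> ` {g \<in> FX d S q. g b = c} \<subseteq> {g \<in> FX d S q. g b = c'}"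
    proof
      fix y assume "y \<in> \<phi> ` {g \<in> FX d S q. g b = c}"
      then obtain g where g: "g \<in> FX d S q" "g b = c" and y: "y = \<phi> g" by blast
      have "\<phi> g \<in> PiE S (\<lambda>_. {..<d})" using g tr unfolding FX_def \<phi>_def by (auto simp: PiE_def extensional_def Pi_iff)
      moreover have "\<forall>k\<in>S. \<phi> g (q k) = \<phi> g k" using g qS unfolding FX_def \<phi>_def by auto
      moreover have "\<phi> g b = c'" using g assms(2) unfolding \<phi>_def by simp
      ultimately show "y \<in> {g \<in> FX d S q. g b = c'}" unfolding FX_def y by simp
    qed
    show "finite {g \<in> FX d S q. g b = c'}" using assms(1) by simp
  qed
qed

lemma card_V:
  assumes "finite S" "b \<in> S" "q permutes S" "c < d"
  shows "d * card {g \<in> FX d S q. g b = c} = card (FX d S q)"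
proof -
  have eq: "card {g \<in> FX d S q. g b = c'} = card {g \<in> FX d S q. g b = c}" if "c' < d" for c'
    using card_V_le[OF assms(1-3) that assms(4)] card_V_le[OF assms(1-3) assms(4) that] by simp
  have "card (FX d S q) = (\<Sum>x\<in>FX d S q. 1)" by simp
  also have "\<dots> = (\<Sum>c'\<in>{..<d}. \<Sum>x\<in>{g \<in> FX d S q. g b = c'}. 1)"
  proof (rule sum.group[symmetric])
    show "finite (FX d S q)" using assms(1) by simp
    show "finite {..<d}" by simp
    show "(\<lambda>g. g b) ` FX d S q \<subseteq> {..<d}" using assms(2) unfolding FX_def by (auto simp: PiE_def)
  qed
  also have "\<dots> = (\<Sum>c'\<in>{..<d}. card {g \<in> FX d S q. g b = c})" using eq by simp
  finally show ?thesis by simp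
qed

lemma HH:
  fixes w :: "nat \<Rightarrow> real"
  assumes "finite T" "a \<in> T" "c < d"
  shows "(\<Sum>\<mu>\<in>{\<mu>. \<mu> permutes T}. w (\<mu> a) * real (card {f \<in> FX d T \<mu>. f a = c})) =
     (w a + (\<Sum>b\<in>T - {a}. w b) / real d) * real (\<Prod>k<card T - 1. d + k)"
proof -
  define S where "S = T - {a}"
  have T: "T = insert a S" "a \<notin> S" "finite S" using assms unfolding S_def by auto
  have cS: "card S = card T - 1" using assms unfolding S_def by simp
  define G where "G = real (\<Prod>k<card T - 1. d + k)"
  have G: "(\<Sum>q\<in>{p. p permutes S}. real (card (FX d S q))) = G"
    unfolding G_def cS[symmetric] G_formula[OF T(3), symmetric] by simp
  have d0: "d > 0" using assms(3) by simp
  have "(\<Sum>\<mu>\<in>{\<mu>. \<mu> permutes T}. w (\<mu> a) * real (card {f \<in> FX d T \<mu>. f a = c})) =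
    (\<Sum>b\<in>insert a S. \<Sum>q\<in>{p. p permutes S}. w ((Transposition.transpose a b \<circ> q) a) *
        real (card {f \<in> FX d (insert a S) (Transposition.transpose a b \<circ> q). f a = c}))"
    unfolding T(1) by (rule sum_over_permutations_insert[OF T(3,2)])
  also have "\<dots> = (\<Sum>q\<in>{p. p permutes S}. w a * real (card (FX d S q))) +
      (\<Sum>b\<in>S. \<Sum>q\<in>{p. p permutes S}. w b * (real (card (FX d S q)) / real d))"
  proof -
    have A: "(\<Sum>q\<in>{p. p permutes S}. w ((Transposition.transpose a a \<circ> q) a) *
        real (card {f \<in> FX d (insert a S) (Transposition.transpose a a \<circ> q). f a = c})) =
        (\<Sum>q\<in>{p. p permutes S}. w a * real (card (FX d S q)))"
    proof (intro sum.cong refl)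
      fix q assume "q \<in> {p. p permutes S}"
      then have q: "q permutes S" by simp
      show "w ((Transposition.transpose a a \<circ> q) a) *
        real (card {f \<in> FX d (insert a S) (Transposition.transpose a a \<circ> q). f a = c}) =
        w a * real (card (FX d S q))"
        using card_H1[OF T(2) q assms(3)] permutes_not_in[OF q T(2)] by simp
    qed
    have B: "(\<Sum>q\<in>{p. p permutes S}. w ((Transposition.transpose a b \<circ> q) a) *
        real (card {f \<in> FX d (insert a S) (Transposition.transpose a b \<circ> q). f a = c})) =
        (\<Sum>q\<in>{p. p permutes S}. w b * (real (card (FX d S q)) / real d))" if b: "b \<in> S" for b
    proof (intro sum.cong refl)
      fix q assume "q \<in> {p. p permutes S}"
      then have q: "q permutes S" by simp
      have "real d * real (card {g \<in> FX d S q. g b = c}) = real (card (FX d S q))"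
        unfolding of_nat_mult[symmetric] card_V[OF T(3) b q assms(3)] ..
      then have "real (card {g \<in> FX d S q. g b = c}) = real (card (FX d S q)) / real d"
        using d0 by (simp add: field_simps)
      then show "w ((Transposition.transpose a b \<circ> q) a) *
        real (card {f \<in> FX d (insert a S) (Transposition.transpose a b \<circ> q). f a = c}) =
        w b * (real (card (FX d S q)) / real d)"
        using card_H2[OF T(2) b q] permutes_not_in[OF q T(2)] by simp
    qed
    have B': "(\<Sum>b\<in>S. \<Sum>q\<in>{p. p permutes S}. w ((Transposition.transpose a b \<circ> q) a) *
        real (card {f \<in> FX d (insert a S) (Transposition.transpose a b \<circ> q). f a = c})) =
        (\<Sum>b\<in>S. \<Sum>q\<in>{p. p permutes S}. w b * (real (card (FX d S q)) / real d))"
      using B by (rule sum.cong[OF refl])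
    show ?thesis unfolding sum.insert[OF T(3,2)] A B' ..
  qed
  also have "\<dots> = (w a + (\<Sum>b\<in>S. w b) / real d) * G"
  proof -
    have 1: "(\<Sum>q\<in>{p. p permutes S}. w a * real (card (FX d S q))) = w a * G"
      unfolding sum_distrib_left[symmetric] G ..
    have 2: "(\<Sum>q\<in>{p. p permutes S}. w b * (real (card (FX d S q)) / real d)) = w b * G / real d" for b
      unfolding sum_distrib_left[symmetric] sum_divide_distrib[symmetric] G by simp
    have 3: "(\<Sum>b\<in>S. w b * G / real d) = (\<Sum>b\<in>S. w b) / real d * G"
      unfolding sum_divide_distrib[symmetric] sum_distrib_right[symmetric] by simp
    show ?thesis unfolding 1 2 3 by (simp add: distrib_right)
  qed
  finally show ?thesis unfolding S_def G_def .
qed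

lemma count_fix:
  assumes "finite T" "\<mu> permutes T" "a \<in> T" "\<forall>m\<in>T - {a}. g (\<mu> m) = g m"
  shows "g (\<mu> a) = (g a :: nat)"
proof -
  let ?I = "\<lambda>m. if g m = g a then 1 else (0::nat)"
  have "(\<Sum>m\<in>T. ?I (\<mu> m)) = (\<Sum>m\<in>T. ?I m)"
    using sum.reindex[OF inj_on_subset[OF permutes_inj[OF assms(2)] subset_UNIV], of ?I T]
      permutes_image[OF assms(2)] by simp
  moreover have "(\<Sum>m\<in>T. ?I (\<mu> m)) = ?I (\<mu> a) + (\<Sum>m\<in>T - {a}. ?I (\<mu> m))"
    using assms(1,3) by (simp add: sum.remove)
  moreover have "(\<Sum>m\<in>T. ?I m) = ?I a + (\<Sum>m\<in>T - {a}. ?I m)"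
    using assms(1,3) by (simp add: sum.remove)
  moreover have "(\<Sum>m\<in>T - {a}. ?I (\<mu> m)) = (\<Sum>m\<in>T - {a}. ?I m)"
    using assms(4) by (intro sum.cong) auto
  ultimately have "?I (\<mu> a) = 1" by simp
  then show ?thesis by (simp split: if_splits)
qed

lemma bridge:
  assumes inv: "\<And>f g. (\<forall>k<N. f k = g k) \<Longrightarrow> P f = P g"
  shows "card {x \<in> idx d N. P (\<lambda>k. x ! k)} = card {f \<in> PiE {..<N} (\<lambda>_. {..<d}). P f}"
proof -
  define r where "r x = restrict (\<lambda>k. x ! k) {..<N}" for x :: "nat list"
  have inj: "inj_on r {x \<in> idx d N. P (\<lambda>k. x ! k)}"
  proof (rule inj_onI)
    fix x1 x2 assume x: "x1 \<in> {x \<in> idx d N. P (\<lambda>k. x ! k)}" "x2 \<in> {x \<in> idx d N. P (\<lambda>k. x ! k)}"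
      and eq: "r x1 = r x2"
    have "x1 ! k = x2 ! k" if "k < N" for k using fun_cong[OF eq, of k] that unfolding r_def by simp
    then show "x1 = x2" using x by (auto simp: idx_def list_eq_iff_nth_eq)
  qed
  have img: "r ` {x \<in> idx d N. P (\<lambda>k. x ! k)} = {f \<in> PiE {..<N} (\<lambda>_. {..<d}). P f}"
  proof (rule set_eqI, rule iffI)
    fix f assume "f \<in> r ` {x \<in> idx d N. P (\<lambda>k. x ! k)}"
    then obtain x where x: "x \<in> idx d N" "P (\<lambda>k. x ! k)" and f: "f = r x" by blast
    have "x ! k < d" if "k < N" for k
    proof -
      have "x ! k \<in> set x" using x(1) that by (simp add: idx_def)
      then show ?thesis using x(1) by (auto simp: idx_def)
    qed
    then have "f \<in> PiE {..<N} (\<lambda>_. {..<d})" unfolding f r_def by auto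
    moreover have "P f" using x(2) inv[of f "\<lambda>k. x ! k"] unfolding f r_def by simp
    ultimately show "f \<in> {f \<in> PiE {..<N} (\<lambda>_. {..<d}). P f}" by simp
  next
    fix f assume f: "f \<in> {f \<in> PiE {..<N} (\<lambda>_. {..<d}). P f}"
    define x where "x = map f [0..<N]"
    have "x \<in> idx d N" using f unfolding x_def idx_def by (auto simp: PiE_def Pi_iff)
    moreover have "P (\<lambda>k. x ! k)" using f inv[of "\<lambda>k. x ! k" f] unfolding x_def by simp
    moreover have "r x = f" using f unfolding r_def x_def by (auto simp: PiE_def extensional_def fun_eq_iff)
    ultimately show "f \<in> r ` {x \<in> idx d N. P (\<lambda>k. x ! k)}" by blast
  qed
  show ?thesis using card_image[OF inj] img by simp
qed

lemma cnd_count: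
  assumes \<sigma>: "\<sigma> permutes {..<Suc n}" and \<tau>: "\<tau> permutes {..<Suc n}"
  shows "card {x \<in> idx d (Suc n). cnd n x x c e \<sigma> \<tau>} =
    (if c = e then card {f \<in> FX d {..<Suc n} (\<tau> \<circ> inv \<sigma>). f (\<sigma> 0) = c} else 0)"
proof -
  define P where "P f \<longleftrightarrow> f (\<sigma> 0) = c \<and> f (\<tau> 0) = e \<and> (\<forall>k<n. f (\<sigma> (Suc k)) = f (\<tau> (Suc k)))" for f :: "nat \<Rightarrow> nat"
  have sl: "\<sigma> k < Suc n" "\<tau> k < Suc n" if "k < Suc n" for k
    using permutes_in_image[OF \<sigma>] permutes_in_image[OF \<tau>] that by auto
  have "card {x \<in> idx d (Suc n). cnd n x x c e \<sigma> \<tau>} = card {x \<in> idx d (Suc n). P (\<lambda>k. x ! k)}"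
    unfolding P_def cnd_def by simp
  also have "\<dots> = card {f \<in> PiE {..<Suc n} (\<lambda>_. {..<d}). P f}"
  proof (rule bridge)
    fix f g :: "nat \<Rightarrow> nat" assume "\<forall>k<Suc n. f k = g k"
    then have "f (\<sigma> k) = g (\<sigma> k) \<and> f (\<tau> k) = g (\<tau> k)" if "k < Suc n" for k using sl[OF that] by simp
    then show "P f = P g" unfolding P_def by (metis Suc_mono zero_less_Suc)
  qed
  also have "{f \<in> PiE {..<Suc n} (\<lambda>_. {..<d}). P f} =
      (if c = e then {f \<in> FX d {..<Suc n} (\<tau> \<circ> inv \<sigma>). f (\<sigma> 0) = c} else {})"
  proof -
    have iff: "P f \<longleftrightarrow> c = e \<and> f (\<sigma> 0) = c \<and> (\<forall>k\<in>{..<Suc n}. f ((\<tau> \<circ> inv \<sigma>) k) = f k)"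
      if f: "f \<in> PiE {..<Suc n} (\<lambda>_. {..<d})" for f
    proof
      assume p: "P f"
      have step: "f ((\<tau> \<circ> inv \<sigma>) m) = f m" if m: "m \<in> {..<Suc n} - {\<sigma> 0}" for m
      proof -
        define k' where "k' = inv \<sigma> m"
        have sk: "\<sigma> k' = m" unfolding k'_def using permutes_inverses(1)[OF \<sigma>] by simp
        have "k' \<noteq> 0"
        proof
          assume "k' = 0" then have "m = \<sigma> 0" using sk by simp
          then show False using m by simp
        qed
        moreover have "k' < Suc n" using permutes_in_image[OF permutes_inv[OF \<sigma>]] m unfolding k'_def by auto
        ultimately obtain k where k: "k' = Suc k" "k < n" by (cases k') auto
        have "(\<tau> \<circ> inv \<sigma>) m = \<tau> (Suc k)" using k unfolding k'_def by simp
        moreover have "f (\<sigma> (Suc k)) = f (\<tau> (Suc k))" using p k(2) unfolding P_def by blast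
        ultimately show ?thesis using sk k(1) by simp
      qed
      have "\<tau> \<circ> inv \<sigma> permutes {..<Suc n}" by (rule permutes_compose[OF permutes_inv[OF \<sigma>] \<tau>])
      then have "f ((\<tau> \<circ> inv \<sigma>) (\<sigma> 0)) = f (\<sigma> 0)"
        using count_fix[where T="{..<Suc n}" and \<mu>="\<tau> \<circ> inv \<sigma>" and a="\<sigma> 0" and g=f] step sl[of 0] by auto
      then have t0: "f (\<tau> 0) = f (\<sigma> 0)" using permutes_inverses(2)[OF \<sigma>] by simp
      have all: "\<forall>k\<in>{..<Suc n}. f ((\<tau> \<circ> inv \<sigma>) k) = f k"
      proof
        fix k assume k: "k \<in> {..<Suc n}"
        show "f ((\<tau> \<circ> inv \<sigma>) k) = f k"
        proof (cases "k = \<sigma> 0")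
          case True then show ?thesis using t0 permutes_inverses(2)[OF \<sigma>] by simp
        next
          case False then show ?thesis using step k by blast
        qed
      qed
      show "c = e \<and> f (\<sigma> 0) = c \<and> (\<forall>k\<in>{..<Suc n}. f ((\<tau> \<circ> inv \<sigma>) k) = f k)"
        using p t0 all unfolding P_def by auto
    next
      assume h: "c = e \<and> f (\<sigma> 0) = c \<and> (\<forall>k\<in>{..<Suc n}. f ((\<tau> \<circ> inv \<sigma>) k) = f k)"
      have "f (\<tau> k) = f (\<sigma> k)" if "k < Suc n" for k
      proof -
        have "f ((\<tau> \<circ> inv \<sigma>) (\<sigma> k)) = f (\<sigma> k)" using h sl[OF that] by blast
        then show ?thesis using permutes_inverses(2)[OF \<sigma>, of k] by simp
      qed
      then show "P f" unfolding P_def using h by auto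
    qed
    show ?thesis
      using iff unfolding FX_def by auto
  qed
  finally show ?thesis by simp
qed

lemma sum_ind_card: "finite A \<Longrightarrow> (\<Sum>x\<in>A. if P x then 1 else 0) = real (card {x \<in> A. P x})"
  using sum.inter_filter[of A "\<lambda>_. (1::real)" P] by simp

lemma trace_sum:
  assumes "c < d"
  shows "(\<Sum>x\<in>idx d (Suc n). Lsum n \<beta> x x c e) =
    (if c = e then fact n * (\<Sum>a<Suc n. \<beta> (a + 1) * (\<beta> (a + 1) + (\<Sum>b\<in>{..<Suc n} - {a}. \<beta> (b + 1)) / real d))
       * real (\<Prod>k<n. d + k) else 0)"
proof -
  define G where "G = real (\<Prod>k<n. d + k)"
  have "(\<Sum>x\<in>idx d (Suc n). Lsum n \<beta> x x c e) =
    (\<Sum>\<sigma>\<in>PS (Suc n). \<Sum>\<tau>\<in>PS (Suc n). \<beta> (\<sigma> 0 + 1) * \<beta> (\<tau> 0 + 1) *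
       (\<Sum>x\<in>idx d (Suc n). if cnd n x x c e \<sigma> \<tau> then 1 else 0))"
    unfolding Lsum_def sum_distrib_left
    by (subst sum.swap, rule sum.cong[OF refl], subst sum.swap, rule refl)
  also have "\<dots> = (\<Sum>\<sigma>\<in>PS (Suc n). \<Sum>\<tau>\<in>PS (Suc n). \<beta> (\<sigma> 0 + 1) * \<beta> (\<tau> 0 + 1) *
       (if c = e then real (card {f \<in> FX d {..<Suc n} (\<tau> \<circ> inv \<sigma>). f (\<sigma> 0) = c}) else 0))"
    by (intro sum.cong refl) (simp add: sum_ind_card cnd_count)
  also have "\<dots> = (if c = e then fact n * (\<Sum>a<Suc n. \<beta> (a + 1) * (\<beta> (a + 1) + (\<Sum>b\<in>{..<Suc n} - {a}. \<beta> (b + 1)) / real d)) * G else 0)"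
  proof (cases "c = e")
    case False then show ?thesis by simp
  next
    case True
    define h where "h a = \<beta> (a + 1) * ((\<beta> (a + 1) + (\<Sum>b\<in>{..<Suc n} - {a}. \<beta> (b + 1)) / real d) * G)" for a
    have inner: "(\<Sum>\<tau>\<in>PS (Suc n). \<beta> (\<sigma> 0 + 1) * \<beta> (\<tau> 0 + 1) *
       real (card {f \<in> FX d {..<Suc n} (\<tau> \<circ> inv \<sigma>). f (\<sigma> 0) = c})) = h (\<sigma> 0)"
      if \<sigma>: "\<sigma> \<in> PS (Suc n)" for \<sigma>
    proof -
      have sp: "\<sigma> permutes {..<Suc n}" using \<sigma> by simp
      have "(\<Sum>\<tau>\<in>PS (Suc n). \<beta> (\<sigma> 0 + 1) * \<beta> (\<tau> 0 + 1) *
         real (card {f \<in> FX d {..<Suc n} (\<tau> \<circ> inv \<sigma>). f (\<sigma> 0) = c})) =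
        (\<Sum>\<mu>\<in>PS (Suc n). \<beta> (\<sigma> 0 + 1) * \<beta> ((\<mu> \<circ> \<sigma>) 0 + 1) *
         real (card {f \<in> FX d {..<Suc n} (\<mu> \<circ> \<sigma> \<circ> inv \<sigma>). f (\<sigma> 0) = c}))"
        by (rule sum_permutations_compose_right[OF sp])
      also have "\<dots> = \<beta> (\<sigma> 0 + 1) * (\<Sum>\<mu>\<in>PS (Suc n). \<beta> (\<mu> (\<sigma> 0) + 1) *
         real (card {f \<in> FX d {..<Suc n} \<mu>. f (\<sigma> 0) = c}))"
        unfolding sum_distrib_left
        by (intro sum.cong refl) (simp add: o_assoc[symmetric] permutes_inv_o(1)[OF sp] mult.assoc)
      also have "\<dots> = h (\<sigma> 0)"
      proof -
        have "\<sigma> 0 \<in> {..<Suc n}" using permutes_in_image[OF sp] by simp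
        then show ?thesis
          unfolding h_def G_def
          using HH[of "{..<Suc n}" "\<sigma> 0" c d "\<lambda>b. \<beta> (b + 1)"] assms by simp
      qed
      finally show ?thesis .
    qed
    have ins: "{..<Suc n} = insert 0 {1..<Suc n}" by auto
    have "(\<Sum>\<sigma>\<in>PS (Suc n). \<Sum>\<tau>\<in>PS (Suc n). \<beta> (\<sigma> 0 + 1) * \<beta> (\<tau> 0 + 1) *
       (if c = e then real (card {f \<in> FX d {..<Suc n} (\<tau> \<circ> inv \<sigma>). f (\<sigma> 0) = c}) else 0)) =
       (\<Sum>\<sigma>\<in>PS (Suc n). h (\<sigma> 0))"
      using inner True by (intro sum.cong refl) simp
    also have "\<dots> = fact n * (\<Sum>a<Suc n. h a)"
      using sum_perm_at[of "{1..<Suc n}" 0 h] unfolding ins[symmetric] by simp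
    also have "(\<Sum>a<Suc n. h a) = (\<Sum>a<Suc n. \<beta> (a + 1) * (\<beta> (a + 1) + (\<Sum>b\<in>{..<Suc n} - {a}. \<beta> (b + 1)) / real d)) * G"
      unfolding h_def sum_distrib_right by (rule sum.cong) (simp_all only: mult.assoc)
    finally show ?thesis by (subst if_P[OF True]) (simp only: mult.assoc)
  qed
  finally show ?thesis unfolding G_def .
qed

lemma move_in3:
  "(\<Sum>a\<in>A. \<Sum>b\<in>B. \<Sum>c\<in>C. \<Sum>e\<in>E. f a b c e) = (\<Sum>b\<in>B. \<Sum>c\<in>C. \<Sum>e\<in>E. \<Sum>a\<in>A. (f a b c e :: complex))"
proof -
  have "(\<Sum>a\<in>A. \<Sum>b\<in>B. \<Sum>c\<in>C. \<Sum>e\<in>E. f a b c e) = (\<Sum>b\<in>B. \<Sum>a\<in>A. \<Sum>c\<in>C. \<Sum>e\<in>E. f a b c e)"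
    by (rule sum.swap)
  also have "\<dots> = (\<Sum>b\<in>B. \<Sum>c\<in>C. \<Sum>a\<in>A. \<Sum>e\<in>E. f a b c e)"
    by (intro sum.cong refl) (rule sum.swap)
  also have "\<dots> = (\<Sum>b\<in>B. \<Sum>c\<in>C. \<Sum>e\<in>E. \<Sum>a\<in>A. f a b c e)"
    by (intro sum.cong refl) (rule sum.swap)
  finally show ?thesis .
qed

lemma quad_expand:
  fixes X :: "'u \<Rightarrow> 'u \<Rightarrow> complex" and L :: "'w \<Rightarrow> 'u \<Rightarrow> 'p \<Rightarrow> complex"
  shows "(\<Sum>p\<in>S. \<Sum>p'\<in>S. cnj (v p) * (\<Sum>w\<in>W. \<Sum>u\<in>K. \<Sum>u'\<in>K. cnj (L w u p) * X u u' * L w u' p') * v p') =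
    (\<Sum>w\<in>W. \<Sum>u\<in>K. \<Sum>u'\<in>K. cnj (\<Sum>p\<in>S. L w u p * v p) * X u u' * (\<Sum>p'\<in>S. L w u' p' * v p'))"
proof -
  have "(\<Sum>p\<in>S. \<Sum>p'\<in>S. cnj (v p) * (\<Sum>w\<in>W. \<Sum>u\<in>K. \<Sum>u'\<in>K. cnj (L w u p) * X u u' * L w u' p') * v p') =
    (\<Sum>p\<in>S. \<Sum>p'\<in>S. \<Sum>w\<in>W. \<Sum>u\<in>K. \<Sum>u'\<in>K. cnj (v p) * cnj (L w u p) * X u u' * L w u' p' * v p')"
    by (simp only: sum_distrib_left sum_distrib_right mult.assoc)
  also have "\<dots> = (\<Sum>p\<in>S. \<Sum>w\<in>W. \<Sum>u\<in>K. \<Sum>u'\<in>K. \<Sum>p'\<in>S. cnj (v p) * cnj (L w u p) * X u u' * L w u' p' * v p')"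
    by (intro sum.cong refl) (rule move_in3)
  also have "\<dots> = (\<Sum>w\<in>W. \<Sum>u\<in>K. \<Sum>u'\<in>K. \<Sum>p\<in>S. \<Sum>p'\<in>S. cnj (v p) * cnj (L w u p) * X u u' * L w u' p' * v p')"
    by (rule move_in3)
  also have "\<dots> = (\<Sum>w\<in>W. \<Sum>u\<in>K. \<Sum>u'\<in>K. cnj (\<Sum>p\<in>S. L w u p * v p) * X u u' * (\<Sum>p'\<in>S. L w u' p' * v p'))"
  proof (intro sum.cong refl)
    fix w u u'
    have "cnj (\<Sum>p\<in>S. L w u p * v p) * X u u' * (\<Sum>p'\<in>S. L w u' p' * v p') =
      (\<Sum>p'\<in>S. \<Sum>p\<in>S. (cnj (L w u p) * cnj (v p)) * X u u' * (L w u' p' * v p'))"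
      by (simp only: cnj_sum complex_cnj_mult sum_distrib_left sum_distrib_right)
    also have "\<dots> = (\<Sum>p\<in>S. \<Sum>p'\<in>S. (cnj (L w u p) * cnj (v p)) * X u u' * (L w u' p' * v p'))"
      by (rule sum.swap)
    also have "\<dots> = (\<Sum>p\<in>S. \<Sum>p'\<in>S. cnj (v p) * cnj (L w u p) * X u u' * L w u' p' * v p')"
      by (intro sum.cong refl) (simp only: mult_ac)
    finally show "(\<Sum>p\<in>S. \<Sum>p'\<in>S. cnj (v p) * cnj (L w u p) * X u u' * L w u' p' * v p') =
      cnj (\<Sum>p\<in>S. L w u p * v p) * X u u' * (\<Sum>p'\<in>S. L w u' p' * v p')" by simp
  qed
  finally show ?thesis .
qed

lemma psd_congr:
  fixes M :: "'p \<Rightarrow> 'p \<Rightarrow> complex" and X :: "'u \<Rightarrow> 'u \<Rightarrow> complex" and L :: "'w \<Rightarrow> 'u \<Rightarrow> 'p \<Rightarrow> complex"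
  assumes X: "psd K X" and r: "r \<ge> 0"
    and M: "\<forall>p\<in>S. \<forall>p'\<in>S. M p p' = complex_of_real r * (\<Sum>w\<in>W. \<Sum>u\<in>K. \<Sum>u'\<in>K. cnj (L w u p) * X u u' * L w u' p')"
  shows "psd S M"
  unfolding psd_def
proof (intro conjI allI ballI)
  have Xh: "\<forall>x\<in>K. \<forall>y\<in>K. X y x = cnj (X x y)"
    using X unfolding psd_def by blast
  fix p p' assume p: "p \<in> S" and p': "p' \<in> S"
  have "cnj (M p p') = complex_of_real r * (\<Sum>w\<in>W. \<Sum>u\<in>K. \<Sum>u'\<in>K. L w u p * X u' u * cnj (L w u' p'))"
  proof -
    have "cnj (M p p') = complex_of_real r * (\<Sum>w\<in>W. \<Sum>u\<in>K. \<Sum>u'\<in>K. cnj (cnj (L w u p) * X u u' * L w u' p'))"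
      using M p p' by (simp only: complex_cnj_mult cnj_sum complex_cnj_complex_of_real)
    also have "\<dots> = complex_of_real r * (\<Sum>w\<in>W. \<Sum>u\<in>K. \<Sum>u'\<in>K. L w u p * X u' u * cnj (L w u' p'))"
    proof (intro arg_cong2[where f="(*)"] refl sum.cong)
      fix w u u' assume u: "u \<in> K" and u': "u' \<in> K"
      have xx: "X u' u = cnj (X u u')" using Xh u u' by blast
      show "cnj (cnj (L w u p) * X u u' * L w u' p') = L w u p * X u' u * cnj (L w u' p')"
        unfolding xx by simp
    qed
    finally show ?thesis .
  qed
  also have "\<dots> = complex_of_real r * (\<Sum>w\<in>W. \<Sum>u'\<in>K. \<Sum>u\<in>K. L w u p * X u' u * cnj (L w u' p'))"
    by (rule arg_cong2[where f="(*)"], rule refl, rule sum.cong[OF refl], rule sum.swap)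
  also have "\<dots> = M p' p" using M p p' by (simp only: mult_ac)
  finally show "M p' p = cnj (M p p')" by simp
next
  fix v :: "'p \<Rightarrow> complex"
  have Xq: "Im (\<Sum>x\<in>K. \<Sum>y\<in>K. cnj (u x) * X x y * u y) = 0 \<and> Re (\<Sum>x\<in>K. \<Sum>y\<in>K. cnj (u x) * X x y * u y) \<ge> 0" for u
    using X unfolding psd_def Let_def by blast
  define U where "U w u = (\<Sum>p\<in>S. L w u p * v p)" for w u
  have "(\<Sum>x\<in>S. \<Sum>y\<in>S. cnj (v x) * M x y * v y) =
    (\<Sum>x\<in>S. \<Sum>y\<in>S. cnj (v x) * (complex_of_real r * (\<Sum>w\<in>W. \<Sum>u\<in>K. \<Sum>u'\<in>K. cnj (L w u x) * X u u' * L w u' y)) * v y)"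
    using M by (intro sum.cong refl) simp
  also have "\<dots> = complex_of_real r * (\<Sum>x\<in>S. \<Sum>y\<in>S. cnj (v x) * (\<Sum>w\<in>W. \<Sum>u\<in>K. \<Sum>u'\<in>K. cnj (L w u x) * X u u' * L w u' y) * v y)"
    by (simp only: sum_distrib_left mult_ac)
  also have "\<dots> = complex_of_real r * (\<Sum>w\<in>W. \<Sum>u\<in>K. \<Sum>u'\<in>K. cnj (U w u) * X u u' * U w u')"
    unfolding quad_expand U_def ..
  finally have q: "(\<Sum>x\<in>S. \<Sum>y\<in>S. cnj (v x) * M x y * v y) = complex_of_real r * (\<Sum>w\<in>W. \<Sum>u\<in>K. \<Sum>u'\<in>K. cnj (U w u) * X u u' * U w u')" .
  have "Im (\<Sum>w\<in>W. \<Sum>u\<in>K. \<Sum>u'\<in>K. cnj (U w u) * X u u' * U w u') = 0"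
    by (subst Im_sum) (use Xq in simp)
  moreover have "Re (\<Sum>w\<in>W. \<Sum>u\<in>K. \<Sum>u'\<in>K. cnj (U w u) * X u u' * U w u') \<ge> 0"
    by (subst Re_sum) (use Xq in \<open>intro sum_nonneg; blast\<close>)
  ultimately show "let q = (\<Sum>x\<in>S. \<Sum>y\<in>S. cnj (v x) * M x y * v y) in Im q = 0 \<and> Re q \<ge> 0"
    unfolding q Let_def using r by simp
qed

lemma binom_prod:
  assumes "d \<ge> 1"
  shows "(m + d - 1 choose m) * fact m = (\<Prod>k<m. d + k)"
proof (induction m)
  case 0 then show ?case by simp
next
  case (Suc m)
  have e: "Suc m + d - 1 = Suc (m + d - 1)" "Suc (m + d - 1) = d + m" using assms by auto
  have "(Suc m + d - 1 choose Suc m) * fact (Suc m) = ((Suc (m + d - 1) choose Suc m) * Suc m) * fact m"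
    unfolding e(1) by (simp only: fact_Suc of_nat_id mult.assoc)
  also have "\<dots> = Suc (m + d - 1) * (m + d - 1 choose m) * fact m"
    using Suc_times_binomial_eq[of "m + d - 1" m] by simp
  also have "\<dots> = (d + m) * (\<Prod>k<m. d + k)" using Suc.IH e(2) by (simp add: mult.assoc)
  also have "\<dots> = (\<Prod>k<Suc m. d + k)" by simp
  finally show ?case .
qed

lemma shift1:
  fixes m :: nat and f :: "nat \<Rightarrow> 'a::comm_monoid_add"
  shows "(\<Sum>i=1..m. f i) = (\<Sum>a<m. f (a + 1))"
  by (induction m) simp_all

lemma alg_beta:
  assumes h: "real (d - 1) * (\<Sum>i=1..Suc n. (\<beta> i)^2) + (\<Sum>i=1..Suc n. \<beta> i)^2 = 1" and d: "d \<ge> 1"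
  shows "(\<Sum>a<Suc n. \<beta> (a + 1) * (\<beta> (a + 1) + (\<Sum>b\<in>{..<Suc n} - {a}. \<beta> (b + 1)) / real d)) = 1 / real d"
proof -
  define B2 where "B2 = (\<Sum>a<Suc n. (\<beta> (a + 1))^2)"
  define Sb where "Sb = (\<Sum>a<Suc n. \<beta> (a + 1))"
  have hB: "(real d - 1) * B2 + Sb^2 = 1"
    using h d unfolding B2_def Sb_def shift1 by (simp add: of_nat_diff)
  have "(\<Sum>a<Suc n. \<beta> (a + 1) * (\<beta> (a + 1) + (\<Sum>b\<in>{..<Suc n} - {a}. \<beta> (b + 1)) / real d)) =
        (\<Sum>a<Suc n. (1 - 1 / real d) * (\<beta> (a + 1))^2 + Sb / real d * \<beta> (a + 1))"
  proof (intro sum.cong refl)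
    fix a assume "a \<in> {..<Suc n}"
    then have hS: "(\<Sum>b\<in>{..<Suc n} - {a}. \<beta> (b + 1)) = Sb - \<beta> (a + 1)"
      unfolding Sb_def by (simp add: sum_diff1)
    show "\<beta> (a + 1) * (\<beta> (a + 1) + (\<Sum>b\<in>{..<Suc n} - {a}. \<beta> (b + 1)) / real d) =
        (1 - 1 / real d) * (\<beta> (a + 1))^2 + Sb / real d * \<beta> (a + 1)"
      unfolding hS using d by (simp add: field_simps power2_eq_square)
  qed
  also have "\<dots> = (1 - 1 / real d) * B2 + Sb / real d * Sb"
    by (simp only: sum.distrib sum_distrib_left B2_def Sb_def)
  also have "\<dots> = ((real d - 1) * B2 + Sb^2) / real d"
    using d by (simp add: field_simps power2_eq_square)
  also have "\<dots> = 1 / real d" using hB by simp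
  finally show ?thesis .
qed

lemma arith2:
  fixes F p D C q G :: real
  assumes "F > 0" "p > 0" "D > 0" "C \<noteq> 0" "q > 0" "C * (p * F) = q * G"
  shows "D * p * q / C * ((1 / (p * F))^2 * (F * (1 / D) * G)) = 1"
proof -
  have G0: "G \<noteq> 0"
  proof
    assume "G = 0" then have "C * (p * F) = 0" using assms(6) by simp
    then show False using assms(1-4) by simp
  qed
  have G: "G = C * (p * F) / q" using assms G0 by (simp add: field_simps)
  show ?thesis unfolding G using assms G0 by (simp add: field_simps power2_eq_square)
qed

lemma const_one:
  assumes d: "d \<ge> 1"
  shows "real d * real (Suc n) * real (Suc n + d - 1) / real ((Suc n + d - 1) choose Suc n) *
     ((1 / fact (Suc n))^2 * (fact n * (1 / real d) * real (\<Prod>k<n. d + k))) = 1"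
proof -
  define C where "C = real ((Suc n + d - 1) choose Suc n)"
  define G where "G = real (\<Prod>k<n. d + k)"
  define F :: real where "F = fact n"
  have bp: "C * (real (Suc n) * F) = (real d + real n) * G"
  proof -
    have "((Suc n + d - 1) choose Suc n) * fact (Suc n) = (\<Prod>k<Suc n. d + k)" by (rule binom_prod[OF d])
    then have "real (((Suc n + d - 1) choose Suc n) * fact (Suc n)) = real ((d + n) * (\<Prod>k<n. d + k))" by simp
    then have "real ((Suc n + d - 1) choose Suc n) * (real (Suc n) * fact n) = real (d + n) * real (\<Prod>k<n. d + k)"
      by (simp only: of_nat_mult of_nat_fact fact_Suc of_nat_id)
    then show ?thesis unfolding C_def G_def F_def by simp
  qed
  have pos: "F > 0" "G > 0" "real d > 0" unfolding F_def G_def using d by (auto intro: prod_pos)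
  have C0: "C \<noteq> 0" using bp pos by auto
  have e: "real (Suc n + d - 1) = real d + real n" using d by simp
  have fs: "(fact (Suc n) :: real) = real (Suc n) * F" unfolding F_def by (simp add: fact_Suc)
  show ?thesis unfolding fs e C_def[symmetric] G_def[symmetric] F_def[symmetric]
    by (rule arith2) (use pos C0 bp d in auto)
qed

lemma trace_pres:
  assumes d: "d \<ge> 2"
    and h: "real (d - 1) * (\<Sum>i=1..Suc n. (\<beta> i)^2) + (\<Sum>i=1..Suc n. \<beta> i)^2 = 1"
  shows "(\<Sum>x\<in>idx d (Suc n). T_beta d (Suc n) \<beta> X x x) = (\<Sum>i<d. X i i)"
proof -
  define V where "V = (1 / fact (Suc n))^2 * (fact n * (1 / real d) * real (\<Prod>k<n. d + k))"
  have d1: "d \<ge> 1" using d by simp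
  have Dsum: "(\<Sum>x\<in>idx d (Suc n). Dm d n \<beta> x x c e) = (if c = e then complex_of_real V else 0)"
    if c: "c < d" for c e
  proof -
    have "(\<Sum>x\<in>idx d (Suc n). Dm d n \<beta> x x c e) =
        (\<Sum>x\<in>idx d (Suc n). complex_of_real ((1 / fact (Suc n))^2 * Lsum n \<beta> x x c e))"
      by (intro sum.cong refl) (rule Dm_formula)
    also have "\<dots> = complex_of_real ((1 / fact (Suc n))^2 * (\<Sum>x\<in>idx d (Suc n). Lsum n \<beta> x x c e))"
      by (simp only: of_real_sum sum_distrib_left)
    also have "\<dots> = (if c = e then complex_of_real V else 0)"
      unfolding trace_sum[OF c] alg_beta[OF h d1] V_def by simp
    finally show ?thesis .
  qed
  have KV: "Kc d (Suc n) * complex_of_real V = 1"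
    unfolding Kc_def V_def of_real_mult[symmetric] const_one[OF d1] by simp
  have "(\<Sum>x\<in>idx d (Suc n). T_beta d (Suc n) \<beta> X x x) =
      Kc d (Suc n) * (\<Sum>x\<in>idx d (Suc n). \<Sum>c<d. \<Sum>e<d. X c e * Dm d n \<beta> x x c e)"
    unfolding T_formula sum_distrib_left ..
  also have "\<dots> = Kc d (Suc n) * (\<Sum>c<d. \<Sum>e<d. X c e * (\<Sum>x\<in>idx d (Suc n). Dm d n \<beta> x x c e))"
  proof -
    have "(\<Sum>x\<in>idx d (Suc n). \<Sum>c<d. \<Sum>e<d. X c e * Dm d n \<beta> x x c e) =
        (\<Sum>c<d. \<Sum>x\<in>idx d (Suc n). \<Sum>e<d. X c e * Dm d n \<beta> x x c e)" by (rule sum.swap)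
    also have "\<dots> = (\<Sum>c<d. \<Sum>e<d. \<Sum>x\<in>idx d (Suc n). X c e * Dm d n \<beta> x x c e)"
      by (intro sum.cong refl) (rule sum.swap)
    finally show ?thesis by (simp only: sum_distrib_left)
  qed
  also have "\<dots> = Kc d (Suc n) * (\<Sum>c<d. \<Sum>e<d. X c e * (if c = e then complex_of_real V else 0))"
    using Dsum by simp
  also have "\<dots> = Kc d (Suc n) * (\<Sum>c<d. X c c * complex_of_real V)"
  proof -
    have "(\<Sum>e<d. X c e * (if c = e then complex_of_real V else 0)) = X c c * complex_of_real V" if "c < d" for c
    proof -
      have "(\<Sum>e<d. X c e * (if c = e then complex_of_real V else 0)) = (\<Sum>e<d. if c = e then X c e * complex_of_real V else 0)"
        by (intro sum.cong refl) simp
      also have "\<dots> = X c c * complex_of_real V" using that by (subst sum.delta') simp_all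
      finally show ?thesis .
    qed
    then show ?thesis by simp
  qed
  also have "\<dots> = (Kc d (Suc n) * complex_of_real V) * (\<Sum>c<d. X c c)"
  proof -
    have "(\<Sum>c<d. X c c * complex_of_real V) = (\<Sum>c<d. X c c) * complex_of_real V"
      by (rule sum_distrib_right[symmetric])
    then show ?thesis by (simp only: mult_ac)
  qed
  finally show ?thesis unfolding KV by simp
qed

lemma linear_T:
  "T_beta d (Suc n) \<beta> (\<lambda>i j. a * X i j + b * Y i j) x y = a * T_beta d (Suc n) \<beta> X x y + b * T_beta d (Suc n) \<beta> Y x y"
proof -
  define D where "D c e = Dm d n \<beta> x y c e" for c e
  have "(\<Sum>c<d. \<Sum>e<d. (a * X c e + b * Y c e) * D c e) = a * (\<Sum>c<d. \<Sum>e<d. X c e * D c e) + b * (\<Sum>c<d. \<Sum>e<d. Y c e * D c e)"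
    by (simp add: distrib_right sum.distrib sum_distrib_left mult.assoc)
  then show ?thesis unfolding T_formula D_def[symmetric] by (simp only: distrib_left mult.left_commute)
qed

lemma P_real: "cnj (P_beta N \<beta> x z) = P_beta N \<beta> x z"
proof -
  have "cnj (perm_op N \<sigma> x z) = perm_op N \<sigma> x z" for \<sigma> unfolding perm_op_def by simp
  then show ?thesis unfolding P_beta_def by (simp add: cnj_sum)
qed

lemma sum_prod_split: "(\<Sum>u\<in>A \<times> B. h u) = (\<Sum>a\<in>A. \<Sum>b\<in>B. h (a, b))"
  by (simp add: sum.cartesian_product)

lemma delta_sel:
  fixes b k d :: nat
  assumes "b < k"
  shows "(\<Sum>u\<in>{..<k} \<times> {..<d}. (if fst u = b then G (snd u) else 0)) = (\<Sum>e<d. (G e :: complex))"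
proof -
  have "(\<Sum>u\<in>{..<k} \<times> {..<d}. (if fst u = b then G (snd u) else 0)) =
      (\<Sum>b'<k. \<Sum>e<d. if b' = b then G e else 0)"
    by (unfold sum_prod_split fst_conv snd_conv) (rule refl)
  also have "\<dots> = (\<Sum>b'<k. if b' = b then (\<Sum>e<d. G e) else 0)"
    by (intro sum.cong refl) simp
  also have "\<dots> = (\<Sum>e<d. G e)" using assms by (subst sum.delta) simp_all
  finally show ?thesis .
qed

lemma delta_pair:
  fixes a b k d :: nat
  assumes a: "a < k" and b: "b < k"
  shows "(\<Sum>u\<in>{..<k} \<times> {..<d}. \<Sum>u'\<in>{..<k} \<times> {..<d}.
      cnj (if fst u = a then f (snd u) else 0) * X u u' * (if fst u' = b then g (snd u') else 0)) =
    (\<Sum>c<d. \<Sum>e<d. cnj (f c) * X (a, c) (b, e) * (g e :: complex))"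
proof -
  have "(\<Sum>u'\<in>{..<k} \<times> {..<d}. cnj (if fst u = a then f (snd u) else 0) * X u u' * (if fst u' = b then g (snd u') else 0)) =
     (if fst u = a then (\<Sum>e<d. cnj (f (snd u)) * X u (b, e) * g e) else 0)" for u
  proof -
    have "(\<Sum>u'\<in>{..<k} \<times> {..<d}. cnj (if fst u = a then f (snd u) else 0) * X u u' * (if fst u' = b then g (snd u') else 0)) =
      (\<Sum>u'\<in>{..<k} \<times> {..<d}. if fst u' = b then (if fst u = a then cnj (f (snd u)) * X u (b, snd u') * g (snd u') else 0) else 0)"
      by (intro sum.cong refl) auto
    also have "\<dots> = (\<Sum>e<d. if fst u = a then cnj (f (snd u)) * X u (b, e) * g e else 0)"
      by (rule delta_sel[OF b])
    also have "\<dots> = (if fst u = a then (\<Sum>e<d. cnj (f (snd u)) * X u (b, e) * g e) else 0)"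
      by simp
    finally show ?thesis .
  qed
  then have "(\<Sum>u\<in>{..<k} \<times> {..<d}. \<Sum>u'\<in>{..<k} \<times> {..<d}.
      cnj (if fst u = a then f (snd u) else 0) * X u u' * (if fst u' = b then g (snd u') else 0)) =
    (\<Sum>u\<in>{..<k} \<times> {..<d}. if fst u = a then (\<Sum>e<d. cnj (f (snd u)) * X (a, snd u) (b, e) * g e) else 0)"
    by (intro sum.cong refl) (auto simp: prod_eq_iff)
  also have "\<dots> = (\<Sum>c<d. \<Sum>e<d. cnj (f c) * X (a, c) (b, e) * g e)"
    by (rule delta_sel[OF a])
  finally show ?thesis .
qed

lemma cp_T:
  fixes X :: "nat \<times> nat \<Rightarrow> nat \<times> nat \<Rightarrow> complex"
  assumes X: "psd ({..<k} \<times> {..<d}) X"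
  shows "psd ({..<k} \<times> idx d (Suc n)) (\<lambda>(a, x) (b, y). T_beta d (Suc n) \<beta> (\<lambda>i j. X (a, i) (b, j)) x y)"
proof (rule psd_congr[OF X, where W="idx d n" and
      L="\<lambda>w u p. if fst u = fst p then P_beta (Suc n) \<beta> (snd p) (snd u # w) else 0"])
  let ?r = "real d * real (Suc n) * real (Suc n + d - 1) / real ((Suc n + d - 1) choose Suc n)"
  show "?r \<ge> 0" by simp
  show "\<forall>p\<in>{..<k} \<times> idx d (Suc n). \<forall>p'\<in>{..<k} \<times> idx d (Suc n).
      (case p of (a, x) \<Rightarrow> \<lambda>(b, y). T_beta d (Suc n) \<beta> (\<lambda>i j. X (a, i) (b, j)) x y) p' =
      complex_of_real ?r * (\<Sum>w\<in>idx d n. \<Sum>u\<in>{..<k} \<times> {..<d}. \<Sum>u'\<in>{..<k} \<times> {..<d}.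
        cnj (if fst u = fst p then P_beta (Suc n) \<beta> (snd p) (snd u # w) else 0) * X u u' *
        (if fst u' = fst p' then P_beta (Suc n) \<beta> (snd p') (snd u' # w) else 0))"
  proof (intro ballI)
    fix p p' assume p: "p \<in> {..<k} \<times> idx d (Suc n)" and p': "p' \<in> {..<k} \<times> idx d (Suc n)"
    obtain a x where px: "p = (a, x)" "a < k" using p by auto
    obtain b y where py: "p' = (b, y)" "b < k" using p' by auto
    let ?P = "P_beta (Suc n) \<beta>"
    have "(\<Sum>w\<in>idx d n. \<Sum>u\<in>{..<k} \<times> {..<d}. \<Sum>u'\<in>{..<k} \<times> {..<d}.
        cnj (if fst u = a then ?P x (snd u # w) else 0) * X u u' * (if fst u' = b then ?P y (snd u' # w) else 0)) =
      (\<Sum>w\<in>idx d n. \<Sum>c<d. \<Sum>e<d. ?P x (c # w) * X (a, c) (b, e) * ?P y (e # w))"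
    proof (intro sum.cong refl)
      fix w
      show "(\<Sum>u\<in>{..<k} \<times> {..<d}. \<Sum>u'\<in>{..<k} \<times> {..<d}.
        cnj (if fst u = a then ?P x (snd u # w) else 0) * X u u' * (if fst u' = b then ?P y (snd u' # w) else 0)) =
        (\<Sum>c<d. \<Sum>e<d. ?P x (c # w) * X (a, c) (b, e) * ?P y (e # w))"
        using delta_pair[OF px(2) py(2), where f="\<lambda>c. ?P x (c # w)" and g="\<lambda>e. ?P y (e # w)" and X=X and d=d]
        by (simp only: P_real)
    qed
    also have "\<dots> = (\<Sum>c<d. \<Sum>e<d. X (a, c) (b, e) * Dm d n \<beta> x y c e)"
    proof -
      have "(\<Sum>w\<in>idx d n. \<Sum>c<d. \<Sum>e<d. ?P x (c # w) * X (a, c) (b, e) * ?P y (e # w)) =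
          (\<Sum>c<d. \<Sum>w\<in>idx d n. \<Sum>e<d. ?P x (c # w) * X (a, c) (b, e) * ?P y (e # w))" by (rule sum.swap)
      also have "\<dots> = (\<Sum>c<d. \<Sum>e<d. \<Sum>w\<in>idx d n. ?P x (c # w) * X (a, c) (b, e) * ?P y (e # w))"
        by (intro sum.cong refl) (rule sum.swap)
      also have "\<dots> = (\<Sum>c<d. \<Sum>e<d. X (a, c) (b, e) * Dm d n \<beta> x y c e)"
        unfolding Dm_def sum_distrib_left by (intro sum.cong refl) (simp only: mult_ac)
      finally show ?thesis .
    qed
    finally have eq: "(\<Sum>w\<in>idx d n. \<Sum>u\<in>{..<k} \<times> {..<d}. \<Sum>u'\<in>{..<k} \<times> {..<d}.
        cnj (if fst u = a then ?P x (snd u # w) else 0) * X u u' * (if fst u' = b then ?P y (snd u' # w) else 0)) =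
      (\<Sum>c<d. \<Sum>e<d. X (a, c) (b, e) * Dm d n \<beta> x y c e)" .
    show "(case p of (a, x) \<Rightarrow> \<lambda>(b, y). T_beta d (Suc n) \<beta> (\<lambda>i j. X (a, i) (b, j)) x y) p' =
      complex_of_real ?r * (\<Sum>w\<in>idx d n. \<Sum>u\<in>{..<k} \<times> {..<d}. \<Sum>u'\<in>{..<k} \<times> {..<d}.
        cnj (if fst u = fst p then P_beta (Suc n) \<beta> (snd p) (snd u # w) else 0) * X u u' *
        (if fst u' = fst p' then P_beta (Suc n) \<beta> (snd p') (snd u' # w) else 0))"
      unfolding px(1) py(1) fst_conv snd_conv prod.case eq by (simp add: T_formula Kc_def)
  qed
qed

theorem mainTheorem13:
  fixes d N :: nat and \<beta> :: "nat \<Rightarrow> real"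
  assumes "d \<ge> 2" and "N \<ge> 1"
    and "real (d - 1) * (\<Sum>i=1..N. (\<beta> i)^2) + (\<Sum>i=1..N. \<beta> i)^2 = 1"
  shows "quantum_channel d N (T_beta d N \<beta>) \<and>
         (\<forall>x\<in>idx d (Suc N). \<forall>y\<in>idx d (Suc N). choi d (T_beta d N \<beta>) x y = C_beta d N \<beta> x y)"
proof -
  obtain n where N: "N = Suc n" using assms(2) by (cases N) auto
  have h: "real (d - 1) * (\<Sum>i=1..Suc n. (\<beta> i)^2) + (\<Sum>i=1..Suc n. \<beta> i)^2 = 1"
    using assms(3) unfolding N .
  have qc: "quantum_channel d (Suc n) (T_beta d (Suc n) \<beta>)"
    unfolding quantum_channel_def
  proof (intro conjI allI impI ballI)
    fix a b X Y x y
    show "T_beta d (Suc n) \<beta> (\<lambda>i j. a * X i j + b * Y i j) x y =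
          a * T_beta d (Suc n) \<beta> X x y + b * T_beta d (Suc n) \<beta> Y x y"
      by (rule linear_T)
  next
    fix k :: nat and X :: "nat \<times> nat \<Rightarrow> nat \<times> nat \<Rightarrow> complex"
    assume "psd ({..<k} \<times> {..<d}) X"
    then show "psd ({..<k} \<times> idx d (Suc n)) (\<lambda>(a, x) (b, y). T_beta d (Suc n) \<beta> (\<lambda>i j. X (a, i) (b, j)) x y)"
      by (rule cp_T)
  next
    fix X
    show "(\<Sum>x\<in>idx d (Suc n). T_beta d (Suc n) \<beta> X x x) = (\<Sum>i<d. X i i)"
      by (rule trace_pres[OF assms(1) h])
  qed
  moreover have "\<forall>x\<in>idx d (Suc (Suc n)). \<forall>y\<in>idx d (Suc (Suc n)).
      choi d (T_beta d (Suc n) \<beta>) x y = C_beta d (Suc n) \<beta> x y"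
    using choi_part by blast
  ultimately show ?thesis unfolding N by blast
qed

end
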